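(* Let $k$ be an algebraically closed field, $P=k[X_1,\ldots,X_n]$, $\mathfrak t=\langle X_1,\ldots,X_n\rangle$, and $M$ a Noetherian $P$-module with $x_i$ the action of $X_i$ on $M$. For $r\ge1$ let $M^{(r)}=P/\mathfrak t^r\otimes_kM$ (a $k$-space isomorphic to $M^{\binom{r+n-1}{n}}$) with the commuting $k$-linear operators $x_i^{(r)}=1\otimes x_i-X_i\otimes1$, making $M^{(r)}$ a $P$-module via $X_i\mapsto x_i^{(r)}$; put $x^{(r)}=(x^{(r)}_1,\ldots,x^{(r)}_n)$. Then $M^{(r)}$ is a Noetherian $P$-module, $\sigma(x^{(r)},M^{(r)})=\sigma(x,M)$ for all $r\ge1$, and $\dim_kH_p(x^{(r)}-a,M^{(r)})<\infty$ for all $p$, all $a\in k^n$ and all $r\ge1$ (i.e. $i(x^{(r)}-a)<\infty$).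
   Context: For a commutative $k$-algebra $R$, an $R$-module $M$ and an $n$-tuple $y$ in $R$, the Koszul complex $\operatorname{Kos}(y,M)$ is $0\leftarrow M\leftarrow M\otimes_k\wedge^1k^n\leftarrow\cdots\leftarrow M\otimes_k\wedge^nk^n\leftarrow 0$ with differential $\partial(u\otimes e_{i_1}\wedge\cdots\wedge e_{i_p})=\sum_{s=1}^p(-1)^{s+1}y_{i_s}u\otimes e_{i_1}\wedge\cdots\wedge\widehat{e_{i_s}}\wedge\cdots\wedge e_{i_p}$, with homology $H_p(y,M)$. For $a\in k^n$, $y-a=(y_1-a_1,\ldots,y_n-a_n)$. Taylor spectrum $\sigma(y,M)$: the set of $a\in k^n$ with $\operatorname{Kos}(y-a,M)$ not exact. Index: $i(y)=\sum_{p=0}^n(-1)^{p+1}\dim_kH_p(y,M)$, with $i(y)<\infty$ meaning all dimensions are finite. *)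

theory Defs
  imports Main "HOL-Library.Function_Algebras" "HOL-Computational_Algebra.Polynomial"
begin

definition alg_closed :: "'k::field itself \<Rightarrow> bool" where
  "alg_closed _ \<longleftrightarrow> (\<forall>p::'k poly. degree p \<ge> 1 \<longrightarrow> (\<exists>z. poly p z = 0))"

(* A P-module, P = k[X_0..X_{n-1}], given by a k-subspace V (of a k-vector space with
   scalar multiplication s) and commuting k-linear operators x i (i < n) on V. *)
definition pmodule :: "('k::field \<Rightarrow> 'm::ab_group_add \<Rightarrow> 'm) \<Rightarrow> 'm set \<Rightarrow> nat \<Rightarrow> (nat \<Rightarrow> 'm \<Rightarrow> 'm) \<Rightarrow> bool" where
  "pmodule s V n x \<longleftrightarrow>
     0 \<in> V \<and> (\<forall>u\<in>V. \<forall>v\<in>V. u + v \<in> V) \<and> (\<forall>c. \<forall>u\<in>V. s c u \<in> V) \<and>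
     (\<forall>i<n. \<forall>u\<in>V. x i u \<in> V) \<and>
     (\<forall>i<n. \<forall>u\<in>V. \<forall>v\<in>V. x i (u + v) = x i u + x i v) \<and>
     (\<forall>i<n. \<forall>c. \<forall>u\<in>V. x i (s c u) = s c (x i u)) \<and>
     (\<forall>i<n. \<forall>j<n. \<forall>u\<in>V. x i (x j u) = x j (x i u))"

definition psubmodule :: "('k::field \<Rightarrow> 'm::ab_group_add \<Rightarrow> 'm) \<Rightarrow> 'm set \<Rightarrow> nat \<Rightarrow> (nat \<Rightarrow> 'm \<Rightarrow> 'm) \<Rightarrow> 'm set \<Rightarrow> bool" where
  "psubmodule s V n x W \<longleftrightarrow>
     W \<subseteq> V \<and> 0 \<in> W \<and> (\<forall>u\<in>W. \<forall>v\<in>W. u + v \<in> W) \<and> (\<forall>c. \<forall>u\<in>W. s c u \<in> W) \<and>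
     (\<forall>i<n. \<forall>u\<in>W. x i u \<in> W)"

definition noetherian_pmodule :: "('k::field \<Rightarrow> 'm::ab_group_add \<Rightarrow> 'm) \<Rightarrow> 'm set \<Rightarrow> nat \<Rightarrow> (nat \<Rightarrow> 'm \<Rightarrow> 'm) \<Rightarrow> bool" where
  "noetherian_pmodule s V n x \<longleftrightarrow> pmodule s V n x \<and>
     (\<forall>C :: nat \<Rightarrow> 'm set. (\<forall>j. psubmodule s V n x (C j)) \<and> (\<forall>j. C j \<subseteq> C (Suc j))
        \<longrightarrow> (\<exists>N. \<forall>j\<ge>N. C j = C N))"

(* Koszul chains: V \<otimes> \<wedge>^p k^n, represented as functions on p-subsets of {..<n} *)
definition kos_chains :: "'m::zero set \<Rightarrow> nat \<Rightarrow> nat \<Rightarrow> (nat set \<Rightarrow> 'm) set" where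
  "kos_chains V n p = {c. (\<forall>I. c I \<in> V) \<and> (\<forall>I. c I \<noteq> 0 \<longrightarrow> I \<subseteq> {..<n} \<and> card I = p)}"

(* Koszul differential: d(u \<otimes> e_{i_1}\<and>..\<and>e_{i_p}) = \<Sum>_s (-1)^(s+1) y_{i_s} u \<otimes> ...;
   the coefficient at J of d c sums over I = insert i J, where s-1 = card {j\<in>J. j<i}. *)
definition kos_diff :: "('k::comm_ring_1 \<Rightarrow> 'm::ab_group_add \<Rightarrow> 'm) \<Rightarrow> nat \<Rightarrow> (nat \<Rightarrow> 'm \<Rightarrow> 'm)
     \<Rightarrow> (nat set \<Rightarrow> 'm) \<Rightarrow> (nat set \<Rightarrow> 'm)" where
  "kos_diff s n y c = (\<lambda>J. if J \<subseteq> {..<n}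
      then (\<Sum>i\<in>{..<n} - J. s ((-1) ^ card {j\<in>J. j < i}) (y i (c (insert i J))))
      else 0)"

definition kos_cycles where
  "kos_cycles s V n y p = {c \<in> kos_chains V n p. kos_diff s n y c = 0}"

definition kos_boundaries where
  "kos_boundaries s V n y p = kos_diff s n y ` kos_chains V n (Suc p)"

definition kos_exact where
  "kos_exact s V n y \<longleftrightarrow> (\<forall>p. kos_cycles s V n y p = kos_boundaries s V n y p)"

definition op_shift :: "('k \<Rightarrow> 'm::ab_group_add \<Rightarrow> 'm) \<Rightarrow> (nat \<Rightarrow> 'm \<Rightarrow> 'm) \<Rightarrow> (nat \<Rightarrow> 'k) \<Rightarrow> nat \<Rightarrow> 'm \<Rightarrow> 'm" where
  "op_shift s y a = (\<lambda>i u. y i u - s (a i) u)"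

(* points of k^n: a :: nat \<Rightarrow> 'k with a i = 0 for i \<ge> n *)
definition taylor_spectrum :: "('k::comm_ring_1 \<Rightarrow> 'm::ab_group_add \<Rightarrow> 'm) \<Rightarrow> 'm set \<Rightarrow> nat \<Rightarrow> (nat \<Rightarrow> 'm \<Rightarrow> 'm) \<Rightarrow> (nat \<Rightarrow> 'k) set" where
  "taylor_spectrum s V n y = {a. (\<forall>i\<ge>n. a i = 0) \<and> \<not> kos_exact s V n (op_shift s y a)}"

definition fscale :: "('k \<Rightarrow> 'm \<Rightarrow> 'm) \<Rightarrow> 'k \<Rightarrow> ('a \<Rightarrow> 'm) \<Rightarrow> ('a \<Rightarrow> 'm)" where
  "fscale s c f = (\<lambda>a. s c (f a))"

(* dim_k H_p(y,V) < \<infinity>: Z_p / B_p is finite-dimensional *)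
definition kos_homology_findim where
  "kos_homology_findim s V n y p \<longleftrightarrow>
     (\<exists>F. finite F \<and> F \<subseteq> kos_cycles s V n y p \<and>
          kos_cycles s V n y p \<subseteq> module.span (fscale s) (F \<union> kos_boundaries s V n y p))"

(* monomial basis of P / t^r: multi-indices \<alpha> with |\<alpha>| < r *)
definition trunc_idx :: "nat \<Rightarrow> nat \<Rightarrow> (nat \<Rightarrow> nat) set" where
  "trunc_idx n r = {\<alpha>. (\<forall>i\<ge>n. \<alpha> i = 0) \<and> sum \<alpha> {..<n} < r}"

(* M^(r) = P/t^r \<otimes>_k M: f \<alpha> is the M-coefficient of X^\<alpha> *)
definition Mr :: "'m set \<Rightarrow> nat \<Rightarrow> nat \<Rightarrow> ((nat \<Rightarrow> nat) \<Rightarrow> 'm::zero) set" where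
  "Mr V n r = {f. (\<forall>\<alpha>. f \<alpha> \<in> V) \<and> (\<forall>\<alpha>. f \<alpha> \<noteq> 0 \<longrightarrow> \<alpha> \<in> trunc_idx n r)}"

(* x_i^(r) = 1 \<otimes> x_i - X_i \<otimes> 1 *)
definition xr :: "(nat \<Rightarrow> 'm \<Rightarrow> 'm) \<Rightarrow> nat \<Rightarrow> nat \<Rightarrow> nat \<Rightarrow> ((nat \<Rightarrow> nat) \<Rightarrow> 'm::ab_group_add) \<Rightarrow> ((nat \<Rightarrow> nat) \<Rightarrow> 'm)" where
  "xr x n r i f = (\<lambda>\<alpha>. if \<alpha> \<in> trunc_idx n r
      then x i (f \<alpha>) - (if 1 \<le> \<alpha> i then f (\<alpha>(i := \<alpha> i - 1)) else 0)
      else 0)"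

end

theory Submission
  imports Defs
begin


lemma sum_fun_apply: "(sum f A) x = sum (\<lambda>a. f a x) A"
  by (induct A rule: infinite_finite_induct) auto

lemma vs_module: "vector_space s \<Longrightarrow> module s"
  by (simp add: vector_space_def module_def)

lemma module_fscale: "module s \<Longrightarrow> module (fscale s)"
  unfolding module_def fscale_def by (auto simp: fun_eq_iff)

locale opm =
  fixes s :: "'k::field \<Rightarrow> 'm::ab_group_add \<Rightarrow> 'm" and V :: "'m set" and n :: nat
    and y :: "nat \<Rightarrow> 'm \<Rightarrow> 'm"
  assumes mods: "module s" and pm: "pmodule s V n y"
begin

sublocale module s by (rule mods)

lemma V0: "0 \<in> V" and Vadd: "u \<in> V \<Longrightarrow> v \<in> V \<Longrightarrow> u + v \<in> V"
  and Vsc: "u \<in> V \<Longrightarrow> s c u \<in> V"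
  and Vy: "i < n \<Longrightarrow> u \<in> V \<Longrightarrow> y i u \<in> V"
  and yadd: "i < n \<Longrightarrow> u \<in> V \<Longrightarrow> v \<in> V \<Longrightarrow> y i (u + v) = y i u + y i v"
  and ysc: "i < n \<Longrightarrow> u \<in> V \<Longrightarrow> y i (s c u) = s c (y i u)"
  and ycomm: "i < n \<Longrightarrow> j < n \<Longrightarrow> u \<in> V \<Longrightarrow> y i (y j u) = y j (y i u)"
  using pm unfolding pmodule_def by blast+

lemma Vneg: "u \<in> V \<Longrightarrow> - u \<in> V"
  using Vsc[of u "-1"] by simp

lemma Vdiff: "u \<in> V \<Longrightarrow> v \<in> V \<Longrightarrow> u - v \<in> V"
  by (metis Vadd Vneg diff_conv_add_uminus)

lemma Vsum: "(\<And>a. a \<in> A \<Longrightarrow> f a \<in> V) \<Longrightarrow> sum f A \<in> V"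
  by (induct A rule: infinite_finite_induct) (auto intro: V0 Vadd)

inductive_set opa :: "('m \<Rightarrow> 'm) set" where
  A_id: "(\<lambda>u. u) \<in> opa"
| A_sc: "(\<lambda>u. s c u) \<in> opa"
| A_y: "i < n \<Longrightarrow> y i \<in> opa"
| A_add: "f \<in> opa \<Longrightarrow> g \<in> opa \<Longrightarrow> (\<lambda>u. f u + g u) \<in> opa"
| A_comp: "f \<in> opa \<Longrightarrow> g \<in> opa \<Longrightarrow> (\<lambda>u. f (g u)) \<in> opa"
| A_eq: "f \<in> opa \<Longrightarrow> (\<forall>u\<in>V. g u = f u) \<Longrightarrow> g \<in> opa"

definition "lin f \<longleftrightarrow> (\<forall>u\<in>V. f u \<in> V) \<and> (\<forall>u\<in>V. \<forall>v\<in>V. f (u + v) = f u + f v) \<and>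
   (\<forall>c. \<forall>u\<in>V. f (s c u) = s c (f u)) \<and> (\<forall>i<n. \<forall>u\<in>V. f (y i u) = y i (f u))"

lemma opa_lin: "f \<in> opa \<Longrightarrow> lin f"
proof (induct rule: opa.induct)
  case A_id then show ?case by (simp add: lin_def)
next
  case (A_sc c) then show ?case
    by (auto simp: lin_def Vsc scale_right_distrib ysc mult.commute)
next
  case (A_y i) then show ?case
    by (auto simp: lin_def Vy yadd ysc ycomm)
next
  case (A_add f g) then show ?case
    by (auto simp: lin_def Vadd Vy yadd Vsc scale_right_distrib)
next
  case (A_comp f g) then show ?case
    by (auto simp: lin_def)
next
  case (A_eq f g) then show ?case
    by (auto simp: lin_def Vadd Vsc Vy)
qed

lemma opa_V: "f \<in> opa \<Longrightarrow> u \<in> V \<Longrightarrow> f u \<in> V"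
  and opa_add: "f \<in> opa \<Longrightarrow> u \<in> V \<Longrightarrow> v \<in> V \<Longrightarrow> f (u + v) = f u + f v"
  and opa_sc: "f \<in> opa \<Longrightarrow> u \<in> V \<Longrightarrow> f (s c u) = s c (f u)"
  and opa_y: "f \<in> opa \<Longrightarrow> i < n \<Longrightarrow> u \<in> V \<Longrightarrow> f (y i u) = y i (f u)"
  using opa_lin unfolding lin_def by blast+

lemma opa_0: "f \<in> opa \<Longrightarrow> f 0 = 0"
  using opa_add[of f 0 0] V0 by simp

lemma opa_neg: "f \<in> opa \<Longrightarrow> u \<in> V \<Longrightarrow> f (- u) = - f u"
  using opa_sc[of f u "-1"] by simp

lemma opa_diff: "f \<in> opa \<Longrightarrow> u \<in> V \<Longrightarrow> v \<in> V \<Longrightarrow> f (u - v) = f u - f v"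
proof -
  assume a: "f \<in> opa" "u \<in> V" "v \<in> V"
  have "f (u + - v) = f u + - f v" using opa_add[of f u "-v"] opa_neg[of f v] Vneg[of v] a by simp
  then show ?thesis by (simp only: diff_conv_add_uminus)
qed

lemma opa_sum: "f \<in> opa \<Longrightarrow> (\<And>a. a \<in> A \<Longrightarrow> g a \<in> V) \<Longrightarrow> f (sum g A) = (\<Sum>a\<in>A. f (g a))"
  by (induct A rule: infinite_finite_induct) (auto simp: opa_0 opa_add Vsum)

lemma opa_comm: "g \<in> opa \<Longrightarrow> f \<in> opa \<Longrightarrow> u \<in> V \<Longrightarrow> f (g u) = g (f u)"
proof (induct g arbitrary: u rule: opa.induct)
  case (A_add g h) then show ?case by (simp add: opa_add opa_V)
next
  case (A_comp g h) then show ?case by (simp add: opa_V)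
next
  case (A_eq g h) then show ?case by (simp add: opa_V)
qed (auto simp: opa_sc opa_y)

lemma opa_zero: "(\<lambda>u. 0) \<in> opa"
  by (rule A_eq[OF A_sc[of 0]]) simp

lemma opa_diffop: "f \<in> opa \<Longrightarrow> g \<in> opa \<Longrightarrow> (\<lambda>u. f u - g u) \<in> opa"
proof -
  assume f: "f \<in> opa" and g: "g \<in> opa"
  have "(\<lambda>u. s (-1) (g u)) \<in> opa" by (rule A_comp[OF A_sc g])
  from A_add[OF f this] show ?thesis by (simp only: scale_minus_left scale_one diff_conv_add_uminus)
qed

lemma opa_sumop: "(\<And>a. a \<in> A \<Longrightarrow> f a \<in> opa) \<Longrightarrow> (\<lambda>u. \<Sum>a\<in>A. f a u) \<in> opa"
proof (induct A rule: infinite_finite_induct)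
  case (insert x F)
  then have "(\<lambda>u. f x u + (\<Sum>a\<in>F. f a u)) \<in> opa" by (intro A_add[of "f x"]) auto
  then show ?case using insert by simp
qed (auto simp: opa_zero)

lemma submod_opa: "f \<in> opa \<Longrightarrow> psubmodule s V n y W \<Longrightarrow> u \<in> W \<Longrightarrow> f u \<in> W"
proof (induct f arbitrary: u rule: opa.induct)
  case (A_eq f g) then show ?case unfolding psubmodule_def by auto
qed (auto simp: psubmodule_def)

definition ideal :: "('m \<Rightarrow> 'm) set" where
  "ideal = {g. \<exists>hs. (\<forall>i<n. hs i \<in> opa) \<and> (\<forall>u\<in>V. g u = (\<Sum>i<n. y i (hs i u)))}"

lemma ideal_opa: "g \<in> ideal \<Longrightarrow> g \<in> opa"
proof -
  assume "g \<in> ideal"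
  then obtain hs where hs: "\<forall>i<n. hs i \<in> opa" "\<forall>u\<in>V. g u = (\<Sum>i<n. y i (hs i u))"
    unfolding ideal_def by blast
  have X: "(\<lambda>u. \<Sum>i<n. y i (hs i u)) \<in> opa" using hs by (intro opa_sumop A_comp[OF A_y]) auto
  show ?thesis by (rule A_eq[OF X]) (use hs in auto)
qed

lemma ideal_zero: "(\<lambda>u. 0) \<in> ideal"
  unfolding ideal_def mem_Collect_eq
  by (intro exI[of _ "\<lambda>i u. 0"] conjI allI impI ballI) (auto simp: opa_zero opa_0 A_y)

lemma ideal_y: "i < n \<Longrightarrow> y i \<in> ideal"
  unfolding ideal_def mem_Collect_eq
proof (intro exI[of _ "\<lambda>j u. if j = i then u else 0"] conjI ballI allI impI)
  fix j assume "j < n"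
  show "(\<lambda>u. if j = i then u else 0) \<in> opa"
    by (cases "j = i") (simp_all add: A_id opa_zero)
next
  fix u assume i: "i < n" and u: "u \<in> V"
  have "(\<Sum>j<n. y j (if j = i then u else 0)) = y i u + (\<Sum>j\<in>{..<n}-{i}. y j (if j = i then u else 0))"
    using i by (subst sum.remove[of _ i]) auto
  also have "(\<Sum>j\<in>{..<n}-{i}. y j (if j = i then u else 0)) = 0"
    by (rule sum.neutral) (auto simp: opa_0 A_y)
  finally show "y i u = (\<Sum>j<n. y j (if j = i then u else 0))" by simp
qed

lemma ideal_add: "f \<in> ideal \<Longrightarrow> g \<in> ideal \<Longrightarrow> (\<lambda>u. f u + g u) \<in> ideal"
  unfolding ideal_def mem_Collect_eq
proof (elim exE conjE)
  fix hs hs' assume a: "\<forall>i<n. hs i \<in> opa" "\<forall>u\<in>V. f u = (\<Sum>i<n. y i (hs i u))"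
    "\<forall>i<n. hs' i \<in> opa" "\<forall>u\<in>V. g u = (\<Sum>i<n. y i (hs' i u))"
  show "\<exists>hs. (\<forall>i<n. hs i \<in> opa) \<and> (\<forall>u\<in>V. f u + g u = (\<Sum>i<n. y i (hs i u)))"
  proof (intro exI[of _ "\<lambda>i u. hs i u + hs' i u"] conjI allI impI ballI)
    fix i assume "i < n" then show "(\<lambda>u. hs i u + hs' i u) \<in> opa"
      using A_add[of "hs i" "hs' i"] a by simp
  next
    fix u assume u: "u \<in> V"
    have "(\<Sum>i<n. y i (hs i u + hs' i u)) = (\<Sum>i<n. y i (hs i u) + y i (hs' i u))"
      by (rule sum.cong) (use a u in \<open>auto simp: yadd opa_V\<close>)
    then show "f u + g u = (\<Sum>i<n. y i (hs i u + hs' i u))"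
      using a u by (simp add: sum.distrib)
  qed
qed

lemma ideal_diff: "f \<in> ideal \<Longrightarrow> g \<in> ideal \<Longrightarrow> (\<lambda>u. f u - g u) \<in> ideal"
  unfolding ideal_def mem_Collect_eq
proof (elim exE conjE)
  fix hs hs' assume a: "\<forall>i<n. hs i \<in> opa" "\<forall>u\<in>V. f u = (\<Sum>i<n. y i (hs i u))"
    "\<forall>i<n. hs' i \<in> opa" "\<forall>u\<in>V. g u = (\<Sum>i<n. y i (hs' i u))"
  show "\<exists>hs. (\<forall>i<n. hs i \<in> opa) \<and> (\<forall>u\<in>V. f u - g u = (\<Sum>i<n. y i (hs i u)))"
  proof (intro exI[of _ "\<lambda>i u. hs i u - hs' i u"] conjI allI impI ballI)
    fix i assume "i < n" then show "(\<lambda>u. hs i u - hs' i u) \<in> opa"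
      using opa_diffop[of "hs i" "hs' i"] a by simp
  next
    fix u assume u: "u \<in> V"
    have "(\<Sum>i<n. y i (hs i u - hs' i u)) = (\<Sum>i<n. y i (hs i u) - y i (hs' i u))"
      by (rule sum.cong) (use a u in \<open>auto simp: opa_diff[OF A_y] opa_V\<close>)
    then show "f u - g u = (\<Sum>i<n. y i (hs i u - hs' i u))"
      using a u by (simp add: sum_subtractf)
  qed
qed

lemma ideal_compL: "f \<in> opa \<Longrightarrow> g \<in> ideal \<Longrightarrow> (\<lambda>u. f (g u)) \<in> ideal"
  unfolding ideal_def
proof clarify
  fix hs assume f: "f \<in> opa" and a: "\<forall>i<n. hs i \<in> opa" "\<forall>u\<in>V. g u = (\<Sum>i<n. y i (hs i u))"
  show "\<exists>hs. (\<forall>i<n. hs i \<in> opa) \<and> (\<forall>u\<in>V. f (g u) = (\<Sum>i<n. y i (hs i u)))"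
    apply (rule exI[of _ "\<lambda>i u. f (hs i u)"])
  proof (intro conjI allI impI ballI)
    fix i assume "i < n" then show "(\<lambda>u. f (hs i u)) \<in> opa" using A_comp[of f "hs i"] a f by simp
  next
    fix u assume u: "u \<in> V"
    have "f (\<Sum>i<n. y i (hs i u)) = (\<Sum>i<n. f (y i (hs i u)))"
      by (rule opa_sum[OF f]) (use a u in \<open>auto intro: Vy opa_V\<close>)
    then have "f (g u) = (\<Sum>i<n. f (y i (hs i u)))" using a u by simp
    also have "\<dots> = (\<Sum>i<n. y i (f (hs i u)))" by (rule sum.cong) (use a u f in \<open>auto simp: opa_y opa_V\<close>)
    finally show "f (g u) = (\<Sum>i<n. y i (f (hs i u)))" .
  qed
qed

lemma ideal_compR: "f \<in> opa \<Longrightarrow> g \<in> ideal \<Longrightarrow> (\<lambda>u. g (f u)) \<in> ideal"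
  unfolding ideal_def
proof clarify
  fix hs assume f: "f \<in> opa" and a: "\<forall>i<n. hs i \<in> opa" "\<forall>u\<in>V. g u = (\<Sum>i<n. y i (hs i u))"
  show "\<exists>hs. (\<forall>i<n. hs i \<in> opa) \<and> (\<forall>u\<in>V. g (f u) = (\<Sum>i<n. y i (hs i u)))"
    apply (rule exI[of _ "\<lambda>i u. hs i (f u)"])
    using a f by (auto intro!: A_comp[of "hs i" f for i] simp: opa_V)
qed

lemma ideal_eq: "g \<in> ideal \<Longrightarrow> (\<forall>u\<in>V. f u = g u) \<Longrightarrow> f \<in> ideal"
  unfolding ideal_def by auto

lemma opa_decomp: "h \<in> opa \<Longrightarrow> \<exists>c g. g \<in> ideal \<and> (\<forall>u\<in>V. h u = s c u + g u)"
proof (induct rule: opa.induct)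
  case A_id then show ?case using ideal_zero by (intro exI[of _ 1]) auto
next
  case (A_sc c) then show ?case using ideal_zero by (intro exI[of _ c]) auto
next
  case (A_y i) then show ?case using ideal_y by (intro exI[of _ 0] exI[of _ "y i"]) auto
next
  case (A_add f g)
  then obtain c1 g1 c2 g2 where "g1 \<in> ideal" "\<forall>u\<in>V. f u = s c1 u + g1 u"
    "g2 \<in> ideal" "\<forall>u\<in>V. g u = s c2 u + g2 u" by blast
  then show ?case
    by (intro exI[of _ "c1 + c2"] exI[of _ "\<lambda>u. g1 u + g2 u"])
      (auto intro!: ideal_add[of g1 g2] simp: scale_left_distrib)
next
  case (A_comp f g)
  then obtain c1 g1 c2 g2 where a: "g1 \<in> ideal" "\<forall>u\<in>V. f u = s c1 u + g1 u"
    "g2 \<in> ideal" "\<forall>u\<in>V. g u = s c2 u + g2 u" by blast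
  have i: "(\<lambda>u. s c2 (g1 u) + f (g2 u)) \<in> ideal"
    using ideal_add[OF ideal_compL[OF A_sc a(1)] ideal_compL[OF A_comp(1) a(3)]] .
  have "\<forall>u\<in>V. f (g u) = s (c2 * c1) u + (s c2 (g1 u) + f (g2 u))"
  proof
    fix u assume u: "u \<in> V"
    have g2: "g2 u \<in> V" using a(3) u ideal_opa opa_V by blast
    have "f (g u) = f (s c2 u) + f (g2 u)" using a u A_comp g2 Vsc by (simp add: opa_add)
    also have "\<dots> = s c2 (s c1 u + g1 u) + f (g2 u)" using a u A_comp by (simp add: opa_sc)
    finally show "f (g u) = s (c2 * c1) u + (s c2 (g1 u) + f (g2 u))"
      by (simp add: scale_right_distrib add.assoc)
  qed
  then show ?case using i by blast
next
  case (A_eq f g) then show ?case by force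
qed

end



context opm begin

lemma psub_V: "psubmodule s V n y V"
  unfolding psubmodule_def by (auto intro: V0 Vadd Vsc Vy)

lemma psub_0: "psubmodule s V n y {0}"
  unfolding psubmodule_def using opa_0[OF A_y] by (auto intro: V0)

lemma psubD: assumes "psubmodule s V n y U"
  shows "U \<subseteq> V" "0 \<in> U" "u \<in> U \<Longrightarrow> v \<in> U \<Longrightarrow> u + v \<in> U" "u \<in> U \<Longrightarrow> s c u \<in> U"
    "i < n \<Longrightarrow> u \<in> U \<Longrightarrow> y i u \<in> U"
  using assms unfolding psubmodule_def by blast+

lemma psub_neg: "psubmodule s V n y U \<Longrightarrow> u \<in> U \<Longrightarrow> - u \<in> U"
  using psubD(4)[of U u "-1"] by simp

lemma psub_diff: "psubmodule s V n y U \<Longrightarrow> u \<in> U \<Longrightarrow> v \<in> U \<Longrightarrow> u - v \<in> U"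
  by (metis psub_neg psubD(3) diff_conv_add_uminus)

lemma psub_sum: "psubmodule s V n y U \<Longrightarrow> (\<And>a. a \<in> A \<Longrightarrow> f a \<in> U) \<Longrightarrow> sum f A \<in> U"
  by (induct A rule: infinite_finite_induct) (auto intro: psubD)

definition addgen :: "'m set \<Rightarrow> 'm \<Rightarrow> 'm set" where
  "addgen U m = {u + h m | u h. u \<in> U \<and> h \<in> opa}"

fun gen :: "'m set \<Rightarrow> 'm list \<Rightarrow> 'm set" where
  "gen U [] = U"
| "gen U (m # G) = gen (addgen U m) G"

lemma addgen_sub: assumes U: "psubmodule s V n y U" and m: "m \<in> V"
  shows "psubmodule s V n y (addgen U m)"
  unfolding psubmodule_def
proof (intro conjI ballI allI impI subsetI)
  fix v assume "v \<in> addgen U m"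
  then obtain u h where a: "v = u + h m" "u \<in> U" "h \<in> opa" unfolding addgen_def by blast
  have "u \<in> V" using psubD(1)[OF U] a(2) by blast
  moreover have "h m \<in> V" by (rule opa_V[OF a(3) m])
  ultimately show "v \<in> V" using a(1) Vadd by simp
next
  show "0 \<in> addgen U m" unfolding addgen_def mem_Collect_eq
    by (rule exI[of _ 0], rule exI[of _ "\<lambda>x. 0"]) (simp add: opa_zero psubD(2)[OF U])
next
  fix v v' assume "v \<in> addgen U m" "v' \<in> addgen U m"
  then obtain u h u' h' where a: "v = u + h m" "u \<in> U" "h \<in> opa" "v' = u' + h' m" "u' \<in> U" "h' \<in> opa"
    unfolding addgen_def by blast
  have e: "v + v' = (u + u') + (\<lambda>x. h x + h' x) m" using a by (simp add: algebra_simps)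
  have o: "(\<lambda>x. h x + h' x) \<in> opa" using A_add[OF a(3) a(6)] .
  have uu: "u + u' \<in> U" using psubD(3)[OF U a(2) a(5)] .
  show "v + v' \<in> addgen U m" unfolding addgen_def mem_Collect_eq
    by (rule exI[of _ "u + u'"], rule exI[of _ "\<lambda>x. h x + h' x"]) (use e o uu in simp)
next
  fix c v assume "v \<in> addgen U m"
  then obtain u h where a: "v = u + h m" "u \<in> U" "h \<in> opa" unfolding addgen_def by blast
  have e: "s c v = s c u + (\<lambda>x. s c (h x)) m" using a by (simp add: scale_right_distrib)
  have o: "(\<lambda>x. s c (h x)) \<in> opa" using A_comp[OF A_sc a(3)] .
  have uu: "s c u \<in> U" using psubD(4)[OF U a(2)] .
  show "s c v \<in> addgen U m" unfolding addgen_def mem_Collect_eq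
    by (rule exI[of _ "s c u"], rule exI[of _ "\<lambda>x. s c (h x)"]) (use e o uu in simp)
next
  fix i v assume i: "i < n" and "v \<in> addgen U m"
  then obtain u h where a: "v = u + h m" "u \<in> U" "h \<in> opa" unfolding addgen_def by blast
  have uV: "u \<in> V" using psubD(1)[OF U] a(2) by blast
  have hV: "h m \<in> V" by (rule opa_V[OF a(3) m])
  have e: "y i v = y i u + (\<lambda>x. y i (h x)) m" using a(1) yadd[OF i uV hV] by simp
  have o: "(\<lambda>x. y i (h x)) \<in> opa" using A_comp[OF A_y[OF i] a(3)] .
  have uu: "y i u \<in> U" using psubD(5)[OF U i a(2)] .
  show "y i v \<in> addgen U m" unfolding addgen_def mem_Collect_eq
    by (rule exI[of _ "y i u"], rule exI[of _ "\<lambda>x. y i (h x)"]) (use e o uu in simp)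
qed

lemma addgen_super: "U \<subseteq> addgen U m"
  unfolding addgen_def using opa_zero by force

lemma addgen_mono: "U \<subseteq> U' \<Longrightarrow> addgen U m \<subseteq> addgen U' m"
  unfolding addgen_def by blast

lemma addgen_in: "0 \<in> U \<Longrightarrow> m \<in> addgen U m"
  unfolding addgen_def using A_id by force

lemma gen_sub: "psubmodule s V n y U \<Longrightarrow> set G \<subseteq> V \<Longrightarrow> psubmodule s V n y (gen U G)"
  by (induct G arbitrary: U) (auto intro: addgen_sub)

lemma gen_super: "U \<subseteq> gen U G"
proof (induct G arbitrary: U)
  case (Cons m G) then show ?case using addgen_super[of U m] by (metis gen.simps(2) order_trans)
qed simp

lemma gen_mono: "U \<subseteq> U' \<Longrightarrow> gen U G \<subseteq> gen U' G"
  by (induct G arbitrary: U U') (auto dest: addgen_mono)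

lemma noethD: "noetherian_pmodule s V n y \<Longrightarrow> (\<And>j. psubmodule s V n y (C j)) \<Longrightarrow> (\<And>j. C j \<subseteq> C (Suc j))
  \<Longrightarrow> \<exists>N. \<forall>j\<ge>N. C j = C N"
  unfolding noetherian_pmodule_def by (drule conjunct2) (drule spec[of _ C], simp)

lemma fg: assumes N: "noetherian_pmodule s V n y" and W: "psubmodule s V n y W"
  shows "\<exists>G. set G \<subseteq> W \<and> W \<subseteq> gen {0} G"
proof (rule ccontr)
  assume H: "\<not> ?thesis"
  define nxt where "nxt G = (SOME w. w \<in> W \<and> w \<notin> gen {0} G)" for G
  define Gs where "Gs = rec_nat [] (\<lambda>k G. nxt G # G)"
  have Gs0: "Gs 0 = []" and GsS: "Gs (Suc k) = nxt (Gs k) # Gs k" for k unfolding Gs_def by simp_all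
  have nxt: "nxt G \<in> W \<and> nxt G \<notin> gen {0} G" if "set G \<subseteq> W" for G
  proof -
    have "\<exists>w. w \<in> W \<and> w \<notin> gen {0} G" using H that by blast
    then show ?thesis unfolding nxt_def by (rule someI_ex)
  qed
  have setG: "set (Gs k) \<subseteq> W" for k
  proof (induct k)
    case 0 then show ?case by (simp add: Gs0)
  next
    case (Suc k) then show ?case using nxt[OF Suc] by (simp add: GsS)
  qed
  define C where "C k = gen {0} (Gs k)" for k
  have WV: "W \<subseteq> V" using psubD(1)[OF W] .
  have "\<exists>N. \<forall>j\<ge>N. C j = C N"
  proof (rule noethD[OF N])
    fix j show "psubmodule s V n y (C j)" unfolding C_def
      by (rule gen_sub[OF psub_0]) (use setG WV in blast)
  next
    fix j
    have "{0} \<subseteq> addgen {0} (nxt (Gs j))" by (rule addgen_super)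
    then show "C j \<subseteq> C (Suc j)" unfolding C_def GsS gen.simps by (rule gen_mono)
  qed
  then obtain N0 where N0: "\<forall>j\<ge>N0. C j = C N0" by blast
  have eq: "C (Suc N0) = C N0" using spec[OF N0, of "Suc N0"] by linarith
  have "nxt (Gs N0) \<in> addgen {0} (nxt (Gs N0))" by (rule addgen_in) simp
  then have "nxt (Gs N0) \<in> C (Suc N0)" unfolding C_def GsS gen.simps using gen_super by blast
  moreover have "nxt (Gs N0) \<notin> C N0" unfolding C_def using nxt setG by blast
  ultimately show False using eq by simp
qed

definition "mV \<longleftrightarrow> (\<forall>v\<in>V. \<exists>w. (\<forall>i<n. w i \<in> V) \<and> v = (\<Sum>i<n. y i (w i)))"

lemma nak_aux: "set G \<subseteq> V \<Longrightarrow> psubmodule s V n y U \<Longrightarrow> V \<subseteq> gen U G \<Longrightarrow> mV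
   \<Longrightarrow> \<exists>g\<in>ideal. \<forall>v\<in>V. v - g v \<in> U"
proof (induct G arbitrary: U)
  case Nil then show ?case using ideal_zero by (intro bexI[of _ "\<lambda>u. 0"]) auto
next
  case (Cons m G)
  note U = Cons.prems(2)
  have m: "m \<in> V" using Cons.prems(1) by auto
  define U' where "U' = addgen U m"
  have U': "psubmodule s V n y U'" unfolding U'_def using addgen_sub[OF U m] .
  obtain g' where g': "g' \<in> ideal" "\<forall>v\<in>V. v - g' v \<in> U'"
    using Cons.hyps[OF _ U'] Cons.prems unfolding U'_def by auto
  define e where "e v = v - g' v" for v
  have e: "(\<lambda>v. e v) \<in> opa" unfolding e_def by (rule opa_diffop[OF A_id ideal_opa[OF g'(1)]])
  have e': "e \<in> opa" using e by simp
  obtain w where w: "\<forall>i<n. w i \<in> V" "m = (\<Sum>i<n. y i (w i))"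
    using Cons.prems(4) m unfolding mV_def by blast
  have "\<forall>i<n. e (w i) \<in> U'" using g'(2) w(1) unfolding e_def by blast
  then have "\<forall>i<n. \<exists>u h. u \<in> U \<and> h \<in> opa \<and> e (w i) = u + h m" unfolding U'_def addgen_def by blast
  then obtain uu hh where uh: "\<forall>i<n. uu i \<in> U \<and> hh i \<in> opa \<and> e (w i) = uu i + hh i m" by metis
  define b where "b v = (\<Sum>i<n. y i (hh i v))" for v
  have b: "b \<in> ideal" unfolding ideal_def b_def using uh by auto
  have UV: "U \<subseteq> V" using psubD(1)[OF U] .
  have "e m = (\<Sum>i<n. e (y i (w i)))" unfolding w(2) by (rule opa_sum[OF e']) (use w in \<open>auto intro: Vy\<close>)
  also have "\<dots> = (\<Sum>i<n. y i (e (w i)))" by (rule sum.cong) (use w e' in \<open>auto simp: opa_y\<close>)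
  also have "\<dots> = (\<Sum>i<n. y i (uu i) + y i (hh i m))"
    by (rule sum.cong) (use uh UV m in \<open>auto simp: yadd opa_V subsetD\<close>)
  also have "\<dots> = (\<Sum>i<n. y i (uu i)) + b m" unfolding b_def by (simp add: sum.distrib)
  finally have em: "e m - b m \<in> U" using uh by (auto intro!: psub_sum[OF U] psubD(5)[OF U])
  define f where "f v = e v - b v" for v
  have f: "f \<in> opa" using opa_diffop[OF e ideal_opa[OF b]] unfolding f_def by (simp add: fun_eq_iff)
  define g where "g v = v - f (e v)" for v
  have "(\<lambda>v. g' v + (\<lambda>v. g' (e v) + b (e v)) v) \<in> ideal"
    by (rule ideal_add[OF g'(1) ideal_add[OF ideal_compR[OF e' g'(1)] ideal_compR[OF e' b]]])
  moreover have "\<forall>v\<in>V. g v = g' v + (\<lambda>v. g' (e v) + b (e v)) v" unfolding g_def f_def e_def by (simp add: algebra_simps)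
  ultimately have gI: "g \<in> ideal" using ideal_eq by blast
  have "\<forall>v\<in>V. v - g v \<in> U"
  proof
    fix v assume v: "v \<in> V"
    have "e v \<in> U'" using g'(2) v unfolding e_def by blast
    then obtain u h where uh2: "u \<in> U" "h \<in> opa" "e v = u + h m" unfolding U'_def addgen_def by blast
    have "v - g v = f (e v)" unfolding g_def by simp
    also have "\<dots> = f u + h (f m)" using uh2 f UV m
      by (simp add: opa_add opa_V subsetD opa_comm[OF uh2(2) f])
    moreover have "f u \<in> U" by (rule submod_opa[OF f U uh2(1)])
    moreover have "f m \<in> U" using em by (simp add: f_def)
    moreover have "h (f m) \<in> U" by (rule submod_opa[OF uh2(2) U \<open>f m \<in> U\<close>])
    ultimately show "v - g v \<in> U" using psubD(3)[OF U] by metis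
  qed
  then show ?case using gI by blast
qed

lemma nakayama: assumes N: "noetherian_pmodule s V n y" and m: mV
  shows "\<exists>g\<in>ideal. \<forall>v\<in>V. g v = v"
proof -
  obtain G where G: "set G \<subseteq> V" "V \<subseteq> gen {0} G" using fg[OF N psub_V] by blast
  obtain g where "g \<in> ideal" "\<forall>v\<in>V. v - g v \<in> {0}" using nak_aux[OF G(1) psub_0 G(2) m] by blast
  then show ?thesis by (intro bexI[of _ g]) auto
qed

end


definition FS :: "'m::zero set \<Rightarrow> 'a set \<Rightarrow> ('a \<Rightarrow> 'm) set" where
  "FS V S = {c. (\<forall>I. c I \<in> V) \<and> (\<forall>I. c I \<noteq> 0 \<longrightarrow> I \<in> S)}"

definition lift :: "('m \<Rightarrow> 'm) \<Rightarrow> ('a \<Rightarrow> 'm) \<Rightarrow> ('a \<Rightarrow> 'm)" where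
  "lift h c = (\<lambda>I. h (c I))"

lemma fscale_lift: "fscale s a = lift (s a)"
  by (simp add: fun_eq_iff fscale_def lift_def)

lemma noethG: "noetherian_pmodule s V n y \<Longrightarrow> (\<And>j. psubmodule s V n y (C j)) \<Longrightarrow> (\<And>j. C j \<subseteq> C (Suc j))
  \<Longrightarrow> \<exists>N. \<forall>j\<ge>N. C j = C N"
  unfolding noetherian_pmodule_def by (drule conjunct2) (drule spec[of _ C], simp)

context opm begin

lemma y0: "i < n \<Longrightarrow> y i 0 = 0"
  using opa_0[OF A_y] .

lemma FS_opm: "opm (fscale s) (FS V S) n (\<lambda>i. lift (y i))"
  unfolding opm_def
proof (rule conjI)
  show "module (fscale s)" by (rule module_fscale[OF mods])
  let ?F = "FS V S"
  have h1: "0 \<in> ?F" unfolding FS_def using V0 by simp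
  have h2: "\<forall>u\<in>?F. \<forall>v\<in>?F. u + v \<in> ?F"
    unfolding FS_def by simp (metis Vadd add.right_neutral)
  have h3: "\<forall>c. \<forall>u\<in>?F. fscale s c u \<in> ?F"
    unfolding FS_def fscale_def by simp (metis Vsc scale_zero_right)
  have h4: "\<forall>i<n. \<forall>u\<in>?F. lift (y i) u \<in> ?F"
    unfolding FS_def lift_def by simp (metis Vy y0)
  have h5: "\<forall>i<n. \<forall>u\<in>?F. \<forall>v\<in>?F. lift (y i) (u + v) = lift (y i) u + lift (y i) v"
    unfolding FS_def lift_def by (simp add: fun_eq_iff yadd)
  have h6: "\<forall>i<n. \<forall>c. \<forall>u\<in>?F. lift (y i) (fscale s c u) = fscale s c (lift (y i) u)"
    unfolding FS_def lift_def fscale_def by (simp add: fun_eq_iff ysc)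
  have h7: "\<forall>i<n. \<forall>j<n. \<forall>u\<in>?F. lift (y i) (lift (y j) u) = lift (y j) (lift (y i) u)"
    unfolding FS_def lift_def by (simp add: fun_eq_iff ycomm)
  show "pmodule (fscale s) ?F n (\<lambda>i. lift (y i))"
    unfolding pmodule_def using h1 h2 h3 h4 h5 h6 h7 by blast
qed

lemma noeth_ext:
  fixes s2 :: "'k \<Rightarrow> 'w::ab_group_add \<Rightarrow> 'w"
  assumes K: "K \<subseteq> V" "noetherian_pmodule s K n y"
    and W: "noetherian_pmodule s2 W n y2"
    and pi: "\<forall>v\<in>V. \<pi> v \<in> W" "\<forall>u\<in>V. \<forall>v\<in>V. \<pi> (u + v) = \<pi> u + \<pi> v"
      "\<forall>c. \<forall>v\<in>V. \<pi> (s c v) = s2 c (\<pi> v)" "\<forall>i<n. \<forall>v\<in>V. \<pi> (y i v) = y2 i (\<pi> v)"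
      "\<forall>v\<in>V. \<pi> v = 0 \<longleftrightarrow> v \<in> K"
  shows "noetherian_pmodule s V n y"
  unfolding noetherian_pmodule_def
proof (intro conjI allI impI)
  show "pmodule s V n y" by (rule pm)
  fix C :: "nat \<Rightarrow> 'm set" assume "(\<forall>j. psubmodule s V n y (C j)) \<and> (\<forall>j. C j \<subseteq> C (Suc j))"
  then have C: "\<And>j. psubmodule s V n y (C j)" "\<And>j. C j \<subseteq> C (Suc j)" by auto
  have pi0: "\<pi> 0 = 0" using pi(2) V0 by (metis add_cancel_right_right)
  have Kp: "pmodule s K n y" using K(2) unfolding noetherian_pmodule_def by blast
  have "\<exists>N. \<forall>j\<ge>N. C j \<inter> K = C N \<inter> K"
  proof (rule noethG[OF K(2)])
    fix j show "psubmodule s K n y (C j \<inter> K)"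
      using psubD[OF C(1)[of j]] Kp unfolding psubmodule_def pmodule_def by auto
    show "C j \<inter> K \<subseteq> C (Suc j) \<inter> K" using C(2) by auto
  qed
  then obtain N1 where N1: "\<forall>j\<ge>N1. C j \<inter> K = C N1 \<inter> K" by blast
  have "\<exists>N. \<forall>j\<ge>N. \<pi> ` C j = \<pi> ` C N"
  proof (rule noethG[OF W])
    fix j
    have CV: "C j \<subseteq> V" using psubD(1)[OF C(1)] .
    show "psubmodule s2 W n y2 (\<pi> ` C j)"
      unfolding psubmodule_def
    proof (intro conjI ballI allI impI)
      show "\<pi> ` C j \<subseteq> W" using CV pi(1) by auto
      show "0 \<in> \<pi> ` C j" using pi0 psubD(2)[OF C(1)] by (metis image_eqI)
      fix a b assume "a \<in> \<pi> ` C j" "b \<in> \<pi> ` C j"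
      then obtain u v where "u \<in> C j" "v \<in> C j" "a = \<pi> u" "b = \<pi> v" by blast
      then show "a + b \<in> \<pi> ` C j" using pi(2) CV psubD(3)[OF C(1)] by (metis image_eqI subsetD)
    next
      fix c a assume "a \<in> \<pi> ` C j"
      then obtain u where "u \<in> C j" "a = \<pi> u" by blast
      then show "s2 c a \<in> \<pi> ` C j" using pi(3) CV psubD(4)[OF C(1)] by (metis image_eqI subsetD)
    next
      fix i a assume "i < n" "a \<in> \<pi> ` C j"
      then obtain u where "u \<in> C j" "a = \<pi> u" by blast
      then show "y2 i a \<in> \<pi> ` C j" using pi(4) CV psubD(5)[OF C(1)] \<open>i < n\<close> by (metis image_eqI subsetD)
    qed
    show "\<pi> ` C j \<subseteq> \<pi> ` C (Suc j)" using C(2) by auto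
  qed
  then obtain N2 where N2: "\<forall>j\<ge>N2. \<pi> ` C j = \<pi> ` C N2" by blast
  have mono: "C i \<subseteq> C j" if "i \<le> j" for i j using that
  proof (induct j)
    case (Suc j) then show ?case using C(2)[of j] by (auto simp: le_Suc_eq)
  qed simp
  show "\<exists>N. \<forall>j\<ge>N. C j = C N"
  proof (intro exI[of _ "max N1 N2"] allI impI)
    fix j assume j: "max N1 N2 \<le> j"
    let ?N = "max N1 N2"
    have e1: "C j \<inter> K = C ?N \<inter> K" using N1 j by (metis max.cobounded1 order_trans)
    have e2: "\<pi> ` C j = \<pi> ` C ?N" using N2 j by (metis max.cobounded2 order_trans)
    show "C j = C ?N"
    proof
      show "C ?N \<subseteq> C j" using mono j .
      show "C j \<subseteq> C ?N"
      proof
        fix v assume v: "v \<in> C j"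
        then obtain w where w: "w \<in> C ?N" "\<pi> v = \<pi> w" using e2 by (metis image_eqI imageE)
        have wj: "w \<in> C j" using w(1) mono j by blast
        have CV: "C j \<subseteq> V" using psubD(1)[OF C(1)] .
        have vw: "v - w \<in> C j" using psub_diff[OF C(1) v wj] .
        have "\<pi> (v - w) + \<pi> w = \<pi> v" using pi(2) CV v wj vw by (metis diff_add_cancel subsetD)
        then have "\<pi> (v - w) = 0" using w(2) by simp
        then have "v - w \<in> K" using pi(5) CV vw by blast
        then have "v - w \<in> C ?N" using e1 vw by blast
        then have "(v - w) + w \<in> C ?N" using psubD(3)[OF C(1) _ w(1)] by blast
        then show "v \<in> C ?N" by simp
      qed
    qed
  qed
qed

lemma FS_noeth: assumes N: "noetherian_pmodule s V n y" and S: "finite S"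
  shows "noetherian_pmodule (fscale s) (FS V S) n (\<lambda>i. lift (y i))"
  using S
proof (induct S rule: finite_induct)
  case empty
  interpret F: opm "fscale s" "FS V {}" n "\<lambda>i. lift (y i)" by (rule FS_opm)
  have FS0: "FS V {} = {0}" unfolding FS_def using V0 by auto
  show ?case unfolding noetherian_pmodule_def
  proof (intro conjI allI impI)
    show "pmodule (fscale s) (FS V {}) n (\<lambda>i. lift (y i))" by (rule F.pm)
    fix C :: "nat \<Rightarrow> ('a \<Rightarrow> 'm) set" assume "(\<forall>j. psubmodule (fscale s) (FS V {}) n (\<lambda>i. lift (y i)) (C j)) \<and> (\<forall>j. C j \<subseteq> C (Suc j))"
    then have "\<forall>j. C j = {0}" unfolding psubmodule_def FS0 by blast
    then show "\<exists>N. \<forall>j\<ge>N. C j = C N" by auto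
  qed
next
  case (insert I S)
  interpret F: opm "fscale s" "FS V (insert I S)" n "\<lambda>i. lift (y i)" by (rule FS_opm)
  have a1: "FS V S \<subseteq> FS V (insert I S)" unfolding FS_def by auto
  have a2: "\<forall>v\<in>FS V (insert I S). v I \<in> V" unfolding FS_def by auto
  have a3: "\<forall>u\<in>FS V (insert I S). \<forall>v\<in>FS V (insert I S). (u + v) I = u I + v I" by simp
  have a4: "\<forall>c. \<forall>v\<in>FS V (insert I S). fscale s c v I = s c (v I)" by (simp add: fscale_def)
  have a5: "\<forall>i<n. \<forall>v\<in>FS V (insert I S). lift (y i) v I = y i (v I)" by (simp add: lift_def)
  have a6: "\<forall>v\<in>FS V (insert I S). (v I = 0) = (v \<in> FS V S)"
    using insert.hyps(2) unfolding FS_def by auto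
  show ?case by (rule F.noeth_ext[OF a1 insert.hyps(3) N a2 a3 a4 a5 a6])
qed

end


definition sg :: "nat set \<Rightarrow> nat \<Rightarrow> 'k::comm_ring_1" where
  "sg K a = (-1) ^ card {j\<in>K. j < a}"

lemma sg_sq: "sg K a * sg K a = 1"
  unfolding sg_def by (simp add: power_mult_distrib[symmetric])

lemma card_insert_less: "finite K \<Longrightarrow> a \<notin> K \<Longrightarrow>
  card {j\<in>insert a K. j < b} = card {j\<in>K. j < b} + (if a < b then 1 else 0)"
proof -
  assume K: "finite K" "a \<notin> K"
  show ?thesis
  proof (cases "a < b")
    case True
    then have "{j\<in>insert a K. j < b} = insert a {j\<in>K. j < b}" by auto
    then show ?thesis using K True by simp
  next
    case False
    then have "{j\<in>insert a K. j < b} = {j\<in>K. j < b}" by auto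
    then show ?thesis using False by simp
  qed
qed

lemma sg_swap: "finite K \<Longrightarrow> a \<notin> K \<Longrightarrow> b \<notin> K \<Longrightarrow> a \<noteq> b \<Longrightarrow>
  sg K a * sg (insert a K) b = - (sg K b * sg (insert b K) a :: 'k::comm_ring_1)"
proof -
  assume K: "finite K" "a \<notin> K" "b \<notin> K" "a \<noteq> b"
  show ?thesis
  proof (cases "a < b")
    case True
    have c1: "card {j\<in>insert a K. j < b} = Suc (card {j\<in>K. j < b})"
      using card_insert_less[OF K(1,2), of b] True by simp
    have c2: "card {j\<in>insert b K. j < a} = card {j\<in>K. j < a}"
      using card_insert_less[OF K(1,3), of a] True by simp
    show ?thesis unfolding sg_def c1 c2 by (simp only: power_Suc) (simp add: algebra_simps)
  next
    case False
    then have F: "b < a" using K(4) by simp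
    have c1: "card {j\<in>insert a K. j < b} = card {j\<in>K. j < b}"
      using card_insert_less[OF K(1,2), of b] F by simp
    have c2: "card {j\<in>insert b K. j < a} = Suc (card {j\<in>K. j < a})"
      using card_insert_less[OF K(1,3), of a] F by simp
    show ?thesis unfolding sg_def c1 c2 by (simp only: power_Suc) (simp add: algebra_simps)
  qed
qed

lemma sg_insert_same: "sg (insert a K) a = sg K a"
  unfolding sg_def by (rule arg_cong[where f = "\<lambda>m. (-1) ^ m"]) (rule arg_cong[where f = card], auto)

lemma sg_remove_same: "sg (K - {a}) a = sg K a"
  unfolding sg_def by (rule arg_cong[where f = "\<lambda>m. (-1) ^ m"]) (rule arg_cong[where f = card], auto)

lemma antisym_double_sum:
  fixes F :: "nat \<Rightarrow> nat \<Rightarrow> 'm::ab_group_add"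
  assumes "finite R" "\<And>k l. k \<in> R \<Longrightarrow> l \<in> R \<Longrightarrow> k \<noteq> l \<Longrightarrow> F l k = - F k l"
  shows "(\<Sum>k\<in>R. \<Sum>l\<in>R - {k}. F k l) = 0"
  using assms
proof (induct R rule: finite_induct)
  case empty then show ?case by simp
next
  case (insert r R)
  have IH: "(\<Sum>k\<in>R. \<Sum>l\<in>R - {k}. F k l) = 0"
    by (rule insert.hyps(3)) (rule insert.prems, auto)
  have "(\<Sum>k\<in>insert r R. \<Sum>l\<in>insert r R - {k}. F k l)
      = (\<Sum>l\<in>R. F r l) + (\<Sum>k\<in>R. \<Sum>l\<in>insert r R - {k}. F k l)"
  proof -
    have e: "insert r R - {r} = R" using insert.hyps(2) by auto
    have "(\<Sum>k\<in>insert r R. \<Sum>l\<in>insert r R - {k}. F k l) = (\<Sum>l\<in>insert r R - {r}. F r l)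
       + (\<Sum>k\<in>R. \<Sum>l\<in>insert r R - {k}. F k l)" by (rule sum.insert[OF insert.hyps(1,2)])
    then show ?thesis unfolding e .
  qed
  also have "(\<Sum>k\<in>R. \<Sum>l\<in>insert r R - {k}. F k l) = (\<Sum>k\<in>R. F k r + (\<Sum>l\<in>R - {k}. F k l))"
  proof (rule sum.cong)
    fix k assume k: "k \<in> R"
    then have e: "insert r R - {k} = insert r (R - {k})" using insert.hyps(2) by auto
    have nr: "r \<notin> R - {k}" and fr: "finite (R - {k})" using insert.hyps(1,2) by auto
    show "(\<Sum>l\<in>insert r R - {k}. F k l) = F k r + (\<Sum>l\<in>R - {k}. F k l)"
      unfolding e by (rule sum.insert[OF fr nr])
  qed simp
  also have "\<dots> = (\<Sum>k\<in>R. F k r) + 0" using IH by (simp add: sum.distrib)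
  also have "(\<Sum>l\<in>R. F r l) + ((\<Sum>k\<in>R. F k r) + 0) = (\<Sum>k\<in>R. F r k + F k r)"
    by (simp add: sum.distrib)
  also have "\<dots> = 0"
  proof (rule sum.neutral, rule ballI)
    fix k assume k: "k \<in> R"
    then have "k \<noteq> r" using insert.hyps(2) by auto
    then have "F k r = - F r k" using insert.prems[of r k] k by blast
    then show "F r k + F k r = 0" by simp
  qed
  finally show ?case .
qed

context opm begin

abbreviation "d \<equiv> kos_diff s n y"

lemma kos_chains_FS: "kos_chains V n p = FS V {I. I \<subseteq> {..<n} \<and> card I = p}"
  unfolding kos_chains_def FS_def by auto

lemma d_V: "\<forall>I. c I \<in> V \<Longrightarrow> d c J \<in> V"
proof -
  assume c: "\<forall>I. c I \<in> V"
  have "(\<Sum>i\<in>{..<n} - J. s ((-1) ^ card {j\<in>J. j < i}) (y i (c (insert i J)))) \<in> V"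
    by (rule Vsum, rule Vsc, rule Vy) (use c in auto)
  then show ?thesis unfolding kos_diff_def using V0 by simp
qed

lemma d_chain: assumes c: "c \<in> kos_chains V n (Suc p)" shows "d c \<in> kos_chains V n p"
  unfolding kos_chains_def mem_Collect_eq
proof (rule conjI; intro allI impI)
  have cV: "\<forall>I. c I \<in> V" using c unfolding kos_chains_def by auto
  fix J show "d c J \<in> V" using d_V[OF cV] .
next
  fix J assume nz: "d c J \<noteq> 0"
  show "J \<subseteq> {..<n} \<and> card J = p"
  proof (cases "J \<subseteq> {..<n}")
    case False then show ?thesis using nz by (simp add: kos_diff_def)
  next
    case True
    then have "(\<Sum>i\<in>{..<n} - J. s ((-1) ^ card {j\<in>J. j < i}) (y i (c (insert i J)))) \<noteq> 0"
      using nz by (simp add: kos_diff_def)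
    then obtain i where i: "i \<in> {..<n} - J" "s ((-1) ^ card {j\<in>J. j < i}) (y i (c (insert i J))) \<noteq> 0"
      by (rule sum.not_neutral_contains_not_neutral)
    then have "c (insert i J) \<noteq> 0" using y0 by auto
    then have "card (insert i J) = Suc p" using c unfolding kos_chains_def by auto
    moreover have "finite J" using True finite_subset by blast
    ultimately show ?thesis using True i(1) by simp
  qed
qed

lemma d_lift: assumes h: "h \<in> opa" and c: "\<forall>I. c I \<in> V"
  shows "d (lift h c) = lift h (d c)"
proof
  fix J
  show "d (lift h c) J = lift h (d c) J"
  proof (cases "J \<subseteq> {..<n}")
    case True
    have "lift h (d c) J = h (\<Sum>i\<in>{..<n} - J. s ((-1) ^ card {j\<in>J. j < i}) (y i (c (insert i J))))"
      using True by (simp add: kos_diff_def lift_def)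
    also have "\<dots> = (\<Sum>i\<in>{..<n} - J. h (s ((-1) ^ card {j\<in>J. j < i}) (y i (c (insert i J)))))"
      by (rule opa_sum[OF h]) (use c in \<open>auto intro: Vsc Vy\<close>)
    also have "\<dots> = (\<Sum>i\<in>{..<n} - J. s ((-1) ^ card {j\<in>J. j < i}) (y i (h (c (insert i J)))))"
      by (rule sum.cong) (use c h in \<open>auto simp: opa_sc opa_y Vy\<close>)
    finally show ?thesis using True by (simp add: kos_diff_def lift_def)
  next
    case False then show ?thesis by (simp add: kos_diff_def lift_def opa_0[OF h])
  qed
qed

lemma d_add: assumes "\<forall>I. c I \<in> V" "\<forall>I. c' I \<in> V"
  shows "d (c + c') = d c + d c'"
proof
  fix J
  show "d (c + c') J = (d c + d c') J"
  proof (cases "J \<subseteq> {..<n}")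
    case True
    have "d (c + c') J = (\<Sum>i\<in>{..<n} - J. s ((-1) ^ card {j\<in>J. j < i}) (y i (c (insert i J)))
       + s ((-1) ^ card {j\<in>J. j < i}) (y i (c' (insert i J))))"
      using True assms by (auto simp: kos_diff_def yadd scale_right_distrib intro!: sum.cong)
    then show ?thesis using True by (simp add: kos_diff_def sum.distrib)
  next
    case False then show ?thesis by (simp add: kos_diff_def)
  qed
qed

lemma d_zero: "d 0 = 0"
  by (auto simp: kos_diff_def fun_eq_iff y0 intro!: sum.neutral)

lemma dd: assumes c: "\<forall>I. c I \<in> V" shows "d (d c) = 0"
proof
  fix K
  show "d (d c) K = 0 K"
  proof (cases "K \<subseteq> {..<n}")
    case False then show ?thesis by (simp add: kos_diff_def)
  next
    case True
    have fK: "finite K" using True finite_subset by blast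
    define R where "R = {..<n} - K"
    define F where "F k l = s (sg K k * sg (insert k K) l) (y k (y l (c (insert l (insert k K)))))" for k l
    have "d (d c) K = (\<Sum>k\<in>R. s (sg K k) (y k (d c (insert k K))))"
      using True unfolding R_def by (simp add: kos_diff_def sg_def)
    also have "\<dots> = (\<Sum>k\<in>R. \<Sum>l\<in>R - {k}. F k l)"
    proof (rule sum.cong[OF refl])
      fix k assume k: "k \<in> R"
      have ins: "insert k K \<subseteq> {..<n}" using k True unfolding R_def by auto
      have R': "{..<n} - insert k K = R - {k}" unfolding R_def by auto
      have "d c (insert k K) = (\<Sum>l\<in>R - {k}. s (sg (insert k K) l) (y l (c (insert l (insert k K)))))"
        using ins by (simp add: kos_diff_def sg_def R')
      then have "s (sg K k) (y k (d c (insert k K)))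
          = s (sg K k) (y k (\<Sum>l\<in>R - {k}. s (sg (insert k K) l) (y l (c (insert l (insert k K))))))"
        by simp
      also have "\<dots> = s (sg K k) (\<Sum>l\<in>R - {k}. y k (s (sg (insert k K) l) (y l (c (insert l (insert k K))))))"
        using k unfolding R_def by (subst opa_sum[OF A_y]) (use c in \<open>auto intro!: Vsc Vy\<close>)
      also have "\<dots> = (\<Sum>l\<in>R - {k}. F k l)"
        unfolding scale_sum_right F_def
        by (rule sum.cong) (use k c in \<open>auto simp: R_def ysc Vy mult.commute\<close>)
      finally show "s (sg K k) (y k (d c (insert k K))) = (\<Sum>l\<in>R - {k}. F k l)" .
    qed
    also have "\<dots> = 0"
    proof (rule antisym_double_sum)
      show "finite R" unfolding R_def by simp
      fix k l assume kl: "k \<in> R" "l \<in> R" "k \<noteq> l"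
      have "sg K l * sg (insert l K) k = - (sg K k * sg (insert k K) l :: 'k)"
        using sg_swap[OF fK, of l k] kl unfolding R_def by auto
      moreover have "y l (y k (c (insert k (insert l K)))) = y k (y l (c (insert l (insert k K))))"
        using kl c unfolding R_def by (simp add: ycomm insert_commute)
      ultimately show "F l k = - F k l" unfolding F_def by simp
    qed
    finally show ?thesis by simp
  qed
qed

definition E :: "nat \<Rightarrow> (nat set \<Rightarrow> 'm) \<Rightarrow> (nat set \<Rightarrow> 'm)" where
  "E i z = (\<lambda>J. if i \<in> J then s (sg (J - {i}) i) (z (J - {i})) else 0)"

lemma E_chain: assumes i: "i < n" and z: "z \<in> kos_chains V n p"
  shows "E i z \<in> kos_chains V n (Suc p)"
  unfolding kos_chains_def mem_Collect_eq
proof (rule conjI; intro allI impI)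
  fix J show "E i z J \<in> V" using z unfolding E_def kos_chains_def by (auto intro: Vsc V0)
next
  fix J assume "E i z J \<noteq> 0"
  then have iJ: "i \<in> J" and nz: "z (J - {i}) \<noteq> 0" unfolding E_def by (auto split: if_splits)
  then have "J - {i} \<subseteq> {..<n}" "card (J - {i}) = p" using z unfolding kos_chains_def by auto
  moreover have "finite J" using finite_subset[OF calculation(1) finite_lessThan] by simp
  moreover have "Suc (card (J - {i})) = card J" using card_Suc_Diff1[OF calculation(3) iJ] .
  ultimately show "J \<subseteq> {..<n} \<and> card J = Suc p" using iJ i by auto
qed

lemma homotopy: assumes i: "i < n" and z: "z \<in> kos_cycles s V n y p"
  shows "d (E i z) = lift (y i) z"
proof
  have zc: "z \<in> kos_chains V n p" and dz: "d z = 0" using z unfolding kos_cycles_def by auto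
  have zV: "\<forall>I. z I \<in> V" using zc unfolding kos_chains_def by auto
  fix J
  show "d (E i z) J = lift (y i) z J"
  proof (cases "J \<subseteq> {..<n}")
    case False
    then have "z J = 0" using zc unfolding kos_chains_def by auto
    then show ?thesis using False i by (simp add: kos_diff_def lift_def y0)
  next
    case True
    have fJ: "finite J" using True finite_subset by blast
    have dEJ: "d (E i z) J = (\<Sum>k\<in>{..<n} - J. s (sg J k) (y k (E i z (insert k J))))"
      using True by (simp add: kos_diff_def sg_def)
    show ?thesis
    proof (cases "i \<in> J")
      case False
      have "d (E i z) J = s (sg J i) (y i (E i z (insert i J)))
          + (\<Sum>k\<in>{..<n} - J - {i}. s (sg J k) (y k (E i z (insert k J))))"
        unfolding dEJ using False i by (subst sum.remove[of _ i]) auto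
      also have "(\<Sum>k\<in>{..<n} - J - {i}. s (sg J k) (y k (E i z (insert k J)))) = 0"
        by (rule sum.neutral) (auto simp: E_def y0 False)
      also have "E i z (insert i J) = s (sg J i) (z J)"
        using False by (simp add: E_def)
      finally show ?thesis using i zV False
        by (simp add: ysc sg_sq lift_def)
    next
      case iJ: True
      define J' where "J' = J - {i}"
      have JJ: "J = insert i J'" "i \<notin> J'" unfolding J'_def using iJ by auto
      have fJ': "finite J'" using fJ unfolding J'_def by simp
      have J'n: "J' \<subseteq> {..<n}" using True unfolding J'_def by auto
      have D: "{..<n} - J' = insert i ({..<n} - J)" using iJ i unfolding J'_def by auto
      have "0 = d z J'" using dz by simp
      also have "\<dots> = (\<Sum>k\<in>{..<n} - J'. s (sg J' k) (y k (z (insert k J'))))"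
        using J'n by (simp add: kos_diff_def sg_def)
      also have "\<dots> = s (sg J' i) (y i (z J)) + (\<Sum>k\<in>{..<n} - J. s (sg J' k) (y k (z (insert k J'))))"
        unfolding D using JJ by simp
      finally have cyc: "(\<Sum>k\<in>{..<n} - J. s (sg J' k) (y k (z (insert k J')))) = - s (sg J' i) (y i (z J))"
        by (simp add: eq_neg_iff_add_eq_0 add.commute)
      have "d (E i z) J = (\<Sum>k\<in>{..<n} - J. s (- sg J' i) (s (sg J' k) (y k (z (insert k J')))))"
        unfolding dEJ
      proof (rule sum.cong[OF refl])
        fix k assume k: "k \<in> {..<n} - J"
        have kJ': "k \<notin> J'" "k \<noteq> i" using k JJ by auto
        have ins: "insert k J - {i} = insert k J'" using kJ' unfolding J'_def by auto
        have Ez: "E i z (insert k J) = s (sg (insert k J') i) (z (insert k J'))"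
          using iJ ins by (simp add: E_def)
        have sw: "sg J' k * sg (insert k J') i = - (sg J' i * sg (insert i J') k :: 'k)"
          by (rule sg_swap[OF fJ' kJ'(1) JJ(2) kJ'(2)])
        have "sg J k * sg (insert k J') i = - sg J' i * (sg J' k :: 'k)"
        proof -
          have A: "sg (insert k J') i = sg J' k * (sg J' k * sg (insert k J') i :: 'k)"
            by (simp add: mult.assoc[symmetric] sg_sq)
          have B: "sg J' k * sg (insert k J') i = - (sg J' i * sg J k :: 'k)" using sw JJ(1) by simp
          have "sg J k * sg (insert k J') i = sg J k * (sg J' k * (sg J' k * sg (insert k J') i) :: 'k)"
            using arg_cong[OF A, of "\<lambda>x. sg J k * x"] .
          also have "\<dots> = sg J k * (sg J' k * (- (sg J' i * sg J k)) :: 'k)" unfolding B ..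
          also have "\<dots> = - ((sg J k * sg J k) * sg J' i * sg J' k :: 'k)" by (simp add: algebra_simps)
          finally show ?thesis by (simp add: sg_sq)
        qed
        then show "s (sg J k) (y k (E i z (insert k J))) = s (- sg J' i) (s (sg J' k) (y k (z (insert k J'))))"
          unfolding Ez using k zV by (simp add: ysc)
      qed
      also have "\<dots> = s (- sg J' i) (\<Sum>k\<in>{..<n} - J. s (sg J' k) (y k (z (insert k J'))))"
        by (simp add: scale_sum_right)
      also have "\<dots> = s (sg J' i * sg J' i) (y i (z J))" unfolding cyc by simp
      finally show ?thesis by (simp add: sg_sq lift_def)
    qed
  qed
qed

end


context opm begin

lemma lift_opa: assumes h: "h \<in> opa"
  shows "lift h \<in> opm.opa (fscale s) (FS V S) n (\<lambda>i. lift (y i))"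
proof -
  interpret ch: opm "fscale s" "FS V S" n "\<lambda>i. lift (y i)" by (rule FS_opm)
  show ?thesis using h
  proof (induct rule: opa.induct)
    case A_id
    have "lift (\<lambda>u. u) = ((\<lambda>u. u) :: (('a \<Rightarrow> 'm) \<Rightarrow> ('a \<Rightarrow> 'm)))" by (simp add: fun_eq_iff lift_def)
    then show ?case using ch.A_id by simp
  next
    case (A_sc c)
    have "lift (\<lambda>u. s c u) = ((\<lambda>u. fscale s c u) :: (('a \<Rightarrow> 'm) \<Rightarrow> ('a \<Rightarrow> 'm)))" by (simp add: fun_eq_iff lift_def fscale_def)
    then show ?case using ch.A_sc[of c] by simp
  next
    case (A_y i) then show ?case using ch.A_y[of i] by simp
  next
    case (A_add f g)
    have e: "lift (\<lambda>u. f u + g u) = ((\<lambda>u. lift f u + lift g u) :: (('a \<Rightarrow> 'm) \<Rightarrow> ('a \<Rightarrow> 'm)))" by (simp add: fun_eq_iff lift_def)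
    show ?case unfolding e by (rule ch.A_add[OF A_add(2) A_add(4)])
  next
    case (A_comp f g)
    have "lift (\<lambda>u. f (g u)) = ((\<lambda>u. lift f (lift g u)) :: (('a \<Rightarrow> 'm) \<Rightarrow> ('a \<Rightarrow> 'm)))" by (simp add: fun_eq_iff lift_def)
    then show ?case using ch.A_comp[OF A_comp(2) A_comp(4)] by simp
  next
    case (A_eq f g)
    have "\<forall>c\<in>FS V S. lift g c = (lift f c :: 'a \<Rightarrow> 'm)" using A_eq(3) unfolding FS_def lift_def by (simp add: fun_eq_iff)
    then show ?case using ch.A_eq[OF A_eq(2)] by blast
  qed
qed

lemma lift_ideal: assumes g: "g \<in> ideal"
  shows "lift g \<in> opm.ideal (fscale s) (FS V S) n (\<lambda>i. lift (y i))"
proof -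
  interpret ch: opm "fscale s" "FS V S" n "\<lambda>i. lift (y i)" by (rule FS_opm)
  obtain hs where hs: "\<forall>i<n. hs i \<in> opa" "\<forall>u\<in>V. g u = (\<Sum>i<n. y i (hs i u))"
    using g unfolding ideal_def by blast
  show ?thesis unfolding ch.ideal_def mem_Collect_eq
  proof (intro exI[of _ "\<lambda>i. lift (hs i)"] conjI allI impI ballI)
    fix i assume "i < n" then show "lift (hs i) \<in> ch.opa" using lift_opa hs by blast
  next
    fix c assume c: "c \<in> FS V S"
    show "lift g c = (\<Sum>i<n. lift (y i) (lift (hs i) c))"
      using c hs(2) unfolding FS_def by (simp add: fun_eq_iff lift_def sum_fun_apply)
  qed
qed

lemma cycles_psub: "psubmodule (fscale s) (kos_chains V n p) n (\<lambda>i. lift (y i)) (kos_cycles s V n y p)"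
proof -
  have CV: "\<And>c. c \<in> kos_chains V n p \<Longrightarrow> \<forall>I. c I \<in> V" unfolding kos_chains_def by auto
  interpret ch: opm "fscale s" "kos_chains V n p" n "\<lambda>i. lift (y i)"
    unfolding kos_chains_FS by (rule FS_opm)
  show ?thesis unfolding psubmodule_def
  proof (intro conjI ballI allI impI)
    show "kos_cycles s V n y p \<subseteq> kos_chains V n p" unfolding kos_cycles_def by auto
    show "0 \<in> kos_cycles s V n y p" unfolding kos_cycles_def using ch.V0 d_zero by simp
  next
    fix u v assume "u \<in> kos_cycles s V n y p" "v \<in> kos_cycles s V n y p"
    then show "u + v \<in> kos_cycles s V n y p" unfolding kos_cycles_def
      using ch.Vadd d_add CV by auto
  next
    fix c u assume u: "u \<in> kos_cycles s V n y p"
    have "d (lift (s c) u) = lift (s c) (d u)" using d_lift[OF A_sc] u CV unfolding kos_cycles_def by auto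
    then show "fscale s c u \<in> kos_cycles s V n y p"
      using u ch.Vsc unfolding kos_cycles_def fscale_lift by (simp add: lift_def fun_eq_iff)
  next
    fix i u assume i: "i < n" and u: "u \<in> kos_cycles s V n y p"
    have "d (lift (y i) u) = lift (y i) (d u)" using d_lift[OF A_y[OF i]] u CV unfolding kos_cycles_def by auto
    then show "lift (y i) u \<in> kos_cycles s V n y p"
      using u ch.Vy[OF i] i unfolding kos_cycles_def by (simp add: lift_def fun_eq_iff y0)
  qed
qed

lemma bnd_0: "0 \<in> kos_boundaries s V n y p"
proof -
  have "(0 :: nat set \<Rightarrow> 'm) \<in> kos_chains V n (Suc p)" unfolding kos_chains_def using V0 by auto
  then show ?thesis unfolding kos_boundaries_def using d_zero by (metis image_eqI)
qed

lemma bnd_add: "u \<in> kos_boundaries s V n y p \<Longrightarrow> v \<in> kos_boundaries s V n y p \<Longrightarrow> u + v \<in> kos_boundaries s V n y p"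
proof -
  interpret ch: opm "fscale s" "kos_chains V n (Suc p)" n "\<lambda>i. lift (y i)"
    unfolding kos_chains_FS by (rule FS_opm)
  assume "u \<in> kos_boundaries s V n y p" "v \<in> kos_boundaries s V n y p"
  then obtain a b where ab: "a \<in> kos_chains V n (Suc p)" "b \<in> kos_chains V n (Suc p)" "u = d a" "v = d b"
    unfolding kos_boundaries_def by blast
  have "d (a + b) = u + v" using d_add ab unfolding kos_chains_def by auto
  moreover have "a + b \<in> kos_chains V n (Suc p)" using ch.Vadd ab by blast
  ultimately show ?thesis unfolding kos_boundaries_def by (metis image_eqI)
qed

lemma bnd_sum: "(\<And>a. a \<in> A \<Longrightarrow> f a \<in> kos_boundaries s V n y p) \<Longrightarrow> sum f A \<in> kos_boundaries s V n y p"
  by (induct A rule: infinite_finite_induct) (auto intro: bnd_0 bnd_add)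

lemma y_cycle_bnd: "i < n \<Longrightarrow> z \<in> kos_cycles s V n y p \<Longrightarrow> lift (y i) z \<in> kos_boundaries s V n y p"
proof -
  assume i: "i < n" and z: "z \<in> kos_cycles s V n y p"
  have "E i z \<in> kos_chains V n (Suc p)" using E_chain[OF i] z unfolding kos_cycles_def by auto
  moreover have "d (E i z) = lift (y i) z" by (rule homotopy[OF i z])
  ultimately show ?thesis unfolding kos_boundaries_def by (metis image_eqI)
qed

lemma ch_ideal_bnd:
  assumes g: "g \<in> opm.ideal (fscale s) (kos_chains V n p) n (\<lambda>i. lift (y i))"
    and z: "z \<in> kos_cycles s V n y p"
  shows "g z \<in> kos_boundaries s V n y p"
proof -
  interpret ch: opm "fscale s" "kos_chains V n p" n "\<lambda>i. lift (y i)"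
    unfolding kos_chains_FS by (rule FS_opm)
  obtain hs where hs: "\<forall>i<n. hs i \<in> ch.opa" "\<forall>u\<in>kos_chains V n p. g u = (\<Sum>i<n. lift (y i) (hs i u))"
    using g unfolding ch.ideal_def by blast
  have zc: "z \<in> kos_chains V n p" using z unfolding kos_cycles_def by auto
  have "g z = (\<Sum>i<n. lift (y i) (hs i z))" using hs zc by blast
  also have "\<dots> \<in> kos_boundaries s V n y p"
  proof (rule bnd_sum)
    fix i assume "i \<in> {..<n}"
    then have i: "i < n" by simp
    have "hs i z \<in> kos_cycles s V n y p" using ch.submod_opa[OF _ cycles_psub z] hs i by blast
    then show "lift (y i) (hs i z) \<in> kos_boundaries s V n y p" by (rule y_cycle_bnd[OF i])
  qed
  finally show ?thesis .
qed

lemma exact_of_mV: assumes N: "noetherian_pmodule s V n y" and m: mV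
  shows "kos_exact s V n y"
  unfolding kos_exact_def
proof
  fix p
  obtain g where g: "g \<in> ideal" "\<forall>v\<in>V. g v = v" using nakayama[OF N m] by blast
  have lg: "lift g \<in> opm.ideal (fscale s) (kos_chains V n p) n (\<lambda>i. lift (y i))"
    unfolding kos_chains_FS by (rule lift_ideal[OF g(1)])
  show "kos_cycles s V n y p = kos_boundaries s V n y p"
  proof
    show "kos_cycles s V n y p \<subseteq> kos_boundaries s V n y p"
    proof
      fix z assume z: "z \<in> kos_cycles s V n y p"
      have "lift g z = z" using z g(2) unfolding kos_cycles_def kos_chains_def lift_def by (auto simp: fun_eq_iff)
      then show "z \<in> kos_boundaries s V n y p" using ch_ideal_bnd[OF lg z] by simp
    qed
    show "kos_boundaries s V n y p \<subseteq> kos_cycles s V n y p"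
    proof
      fix b assume "b \<in> kos_boundaries s V n y p"
      then obtain c where c: "c \<in> kos_chains V n (Suc p)" "b = d c" unfolding kos_boundaries_def by blast
      have "\<forall>I. c I \<in> V" using c unfolding kos_chains_def by auto
      then show "b \<in> kos_cycles s V n y p" using c d_chain[OF c(1)] dd unfolding kos_cycles_def by auto
    qed
  qed
qed

lemma mV_of_exact: assumes ex: "kos_exact s V n y" shows mV
  unfolding mV_def
proof
  fix v assume v: "v \<in> V"
  define c :: "nat set \<Rightarrow> 'm" where "c = (\<lambda>I. if I = {} then v else 0)"
  have cc: "c \<in> kos_chains V n 0" unfolding kos_chains_def c_def using v V0 by auto
  have "d c = 0"
  proof
    fix J
    have "\<forall>i. c (insert i J) = 0" unfolding c_def by auto
    then show "d c J = 0 J" unfolding kos_diff_def by (simp add: y0)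
  qed
  then have "c \<in> kos_cycles s V n y 0" using cc unfolding kos_cycles_def by auto
  then have "c \<in> kos_boundaries s V n y 0" using ex unfolding kos_exact_def by blast
  then obtain b where b: "b \<in> kos_chains V n 1" "c = d b" unfolding kos_boundaries_def by auto
  have "v = c {}" unfolding c_def by simp
  also have "\<dots> = (\<Sum>i<n. y i (b {i}))" unfolding b(2) kos_diff_def by simp
  finally show "\<exists>w. (\<forall>i<n. w i \<in> V) \<and> v = (\<Sum>i<n. y i (w i))"
    using b(1) unfolding kos_chains_def by (intro exI[of _ "\<lambda>i. b {i}"]) auto
qed

lemma exact_iff_mV: "noetherian_pmodule s V n y \<Longrightarrow> kos_exact s V n y \<longleftrightarrow> mV"
  using exact_of_mV mV_of_exact by blast

lemma findim: assumes N: "noetherian_pmodule s V n y"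
  shows "kos_homology_findim s V n y p"
proof -
  let ?C = "kos_chains V n p" and ?Z = "kos_cycles s V n y p" and ?B = "kos_boundaries s V n y p"
  interpret ch: opm "fscale s" ?C n "\<lambda>i. lift (y i)"
    unfolding kos_chains_FS by (rule FS_opm)
  interpret M: module "fscale s" by (rule module_fscale[OF mods])
  have NC: "noetherian_pmodule (fscale s) ?C n (\<lambda>i. lift (y i))"
    unfolding kos_chains_FS by (rule FS_noeth[OF N]) simp
  obtain G where G: "set G \<subseteq> ?Z" "?Z \<subseteq> ch.gen {0} G" using ch.fg[OF NC cycles_psub] by blast
  define X where "X = set G \<union> ?B"
  have ZC: "?Z \<subseteq> ?C" unfolding kos_cycles_def by auto
  have step: "ch.addgen U m \<subseteq> M.span X" if U: "U \<subseteq> M.span X" and m: "m \<in> set G" for U m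
  proof
    fix v assume "v \<in> ch.addgen U m"
    then obtain u h where uh: "v = u + h m" "u \<in> U" "h \<in> ch.opa" unfolding ch.addgen_def by blast
    obtain c g where cg: "g \<in> ch.ideal" "\<forall>u\<in>?C. h u = fscale s c u + g u" using ch.opa_decomp[OF uh(3)] by blast
    have mZ: "m \<in> ?Z" using m G(1) by blast
    have "g m \<in> ?B" by (rule ch_ideal_bnd[OF cg(1) mZ])
    then have "g m \<in> M.span X" unfolding X_def by (intro M.span_base) simp
    moreover have "fscale s c m \<in> M.span X" unfolding X_def using m by (intro M.span_scale M.span_base) simp
    moreover have "h m = fscale s c m + g m" using cg(2) mZ ZC by blast
    ultimately have "h m \<in> M.span X" using M.span_add by metis
    then show "v \<in> M.span X" using uh U M.span_add by blast
  qed
  have gen: "ch.gen U G' \<subseteq> M.span X" if "U \<subseteq> M.span X" "set G' \<subseteq> set G" for U G'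
    using that
  proof (induct G' arbitrary: U)
    case Nil then show ?case by simp
  next
    case (Cons m G') then show ?case using step by simp
  qed
  have "?Z \<subseteq> M.span X" using G(2) gen[of "{0}" G] M.span_zero by auto
  then show ?thesis unfolding kos_homology_findim_def X_def using G(1) by blast
qed

end


lemma trunc_mono: "r \<le> r' \<Longrightarrow> trunc_idx n r \<subseteq> trunc_idx n r'"
  unfolding trunc_idx_def by auto

lemma trunc_finite: "finite (trunc_idx n r)"
proof -
  have "trunc_idx n r \<subseteq> {f. \<forall>x. (x \<in> {..<n} \<longrightarrow> f x \<in> {..<r}) \<and> (x \<notin> {..<n} \<longrightarrow> f x = 0)}"
  proof
    fix \<alpha> assume a: "\<alpha> \<in> trunc_idx n r"
    have "\<alpha> x < r" if "x < n" for x
    proof -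
      have "\<alpha> x \<le> sum \<alpha> {..<n}" using that by (intro member_le_sum) auto
      then show ?thesis using a unfolding trunc_idx_def by simp
    qed
    then show "\<alpha> \<in> {f. \<forall>x. (x \<in> {..<n} \<longrightarrow> f x \<in> {..<r}) \<and> (x \<notin> {..<n} \<longrightarrow> f x = 0)}"
      using a unfolding trunc_idx_def by auto
  qed
  moreover have "finite {f. \<forall>x. (x \<in> {..<n} \<longrightarrow> f x \<in> {..<r}) \<and> (x \<notin> {..<n} \<longrightarrow> f x = (0::nat))}"
    by (rule finite_set_of_finite_funs) auto
  ultimately show ?thesis by (rule finite_subset)
qed

lemma zero_trunc: "1 \<le> r \<Longrightarrow> (\<lambda>_. 0) \<in> trunc_idx n r"
  unfolding trunc_idx_def by auto

definition Dm :: "nat \<Rightarrow> (nat \<Rightarrow> nat) \<Rightarrow> (nat \<Rightarrow> nat)" where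
  "Dm i \<alpha> = \<alpha>(i := \<alpha> i - 1)"

lemma sum_Dm: "i < n \<Longrightarrow> 1 \<le> \<alpha> i \<Longrightarrow> Suc (sum (Dm i \<alpha>) {..<n}) = sum \<alpha> {..<n}"
proof -
  assume i: "i < n" and a: "1 \<le> \<alpha> i"
  have "sum \<alpha> {..<n} = \<alpha> i + sum \<alpha> ({..<n} - {i})" using i by (subst sum.remove[of _ i]) auto
  moreover have "sum (Dm i \<alpha>) {..<n} = (\<alpha> i - 1) + sum (Dm i \<alpha>) ({..<n} - {i})"
    using i by (subst sum.remove[of _ i]) (auto simp: Dm_def)
  moreover have "sum (Dm i \<alpha>) ({..<n} - {i}) = sum \<alpha> ({..<n} - {i})"
    by (rule sum.cong) (auto simp: Dm_def)
  ultimately show ?thesis using a by simp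
qed

lemma Dm_trunc: "\<alpha> \<in> trunc_idx n r \<Longrightarrow> i < n \<Longrightarrow> 1 \<le> \<alpha> i \<Longrightarrow> Dm i \<alpha> \<in> trunc_idx n (r - 1)"
  using sum_Dm[of i n \<alpha>] unfolding trunc_idx_def by (auto simp: Dm_def)

lemma Dm_trunc': "\<alpha> \<in> trunc_idx n r \<Longrightarrow> i < n \<Longrightarrow> 1 \<le> \<alpha> i \<Longrightarrow> Dm i \<alpha> \<in> trunc_idx n r"
  using Dm_trunc[of \<alpha> n r i] trunc_mono[of "r - 1" r n] by auto

definition top_idx :: "nat \<Rightarrow> nat \<Rightarrow> (nat \<Rightarrow> nat) set" where
  "top_idx n r = {\<alpha>\<in>trunc_idx n (Suc r). sum \<alpha> {..<n} = r}"

lemma top_eq: "top_idx n r = trunc_idx n (Suc r) - trunc_idx n r"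
  unfolding top_idx_def trunc_idx_def by auto

lemma Dm_not_top: "\<alpha> \<in> trunc_idx n (Suc r) \<Longrightarrow> i < n \<Longrightarrow> 1 \<le> \<alpha> i \<Longrightarrow> Dm i \<alpha> \<notin> top_idx n r"
  using sum_Dm[of i n \<alpha>] unfolding top_idx_def trunc_idx_def by auto

lemma Mr_FS: "Mr V n r = FS V (trunc_idx n r)"
  unfolding Mr_def FS_def by auto

lemma xr_apply: "xr y n r i f \<alpha> = (if \<alpha> \<in> trunc_idx n r
      then y i (f \<alpha>) - (if 1 \<le> \<alpha> i then f (Dm i \<alpha>) else 0) else 0)"
  unfolding xr_def Dm_def by simp

lemma noeth_cong:
  assumes N: "noetherian_pmodule s V n y" and eq: "\<forall>i<n. \<forall>u\<in>V. y' i u = y i u"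
  shows "noetherian_pmodule s V n y'"
proof -
  have pm: "pmodule s V n y" using N unfolding noetherian_pmodule_def by blast
  have P: "0 \<in> V" "\<forall>u\<in>V. \<forall>v\<in>V. u + v \<in> V" "\<forall>c. \<forall>u\<in>V. s c u \<in> V"
     "\<forall>i<n. \<forall>u\<in>V. y i u \<in> V" "\<forall>i<n. \<forall>u\<in>V. \<forall>v\<in>V. y i (u + v) = y i u + y i v"
     "\<forall>i<n. \<forall>c. \<forall>u\<in>V. y i (s c u) = s c (y i u)" "\<forall>i<n. \<forall>j<n. \<forall>u\<in>V. y i (y j u) = y j (y i u)"
    using pm unfolding pmodule_def by blast+
  have pm': "pmodule s V n y'"
    unfolding pmodule_def
  proof (intro conjI ballI allI impI)
    show "0 \<in> V" by (rule P(1))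
    show "\<And>u v. u \<in> V \<Longrightarrow> v \<in> V \<Longrightarrow> u + v \<in> V" using P(2) by blast
    show "\<And>c u. u \<in> V \<Longrightarrow> s c u \<in> V" using P(3) by blast
    show "\<And>i u. i < n \<Longrightarrow> u \<in> V \<Longrightarrow> y' i u \<in> V" using P(4) eq by simp
    show "\<And>i u v. i < n \<Longrightarrow> u \<in> V \<Longrightarrow> v \<in> V \<Longrightarrow> y' i (u + v) = y' i u + y' i v"
      using P(2,5) eq by simp
    show "\<And>i c u. i < n \<Longrightarrow> u \<in> V \<Longrightarrow> y' i (s c u) = s c (y' i u)"
      using P(3,6) eq by simp
    show "\<And>i j u. i < n \<Longrightarrow> j < n \<Longrightarrow> u \<in> V \<Longrightarrow> y' i (y' j u) = y' j (y' i u)"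
      using P(4,7) eq by simp
  qed
  have ps: "psubmodule s V n y' W = psubmodule s V n y W" for W
  proof -
    have "W \<subseteq> V \<Longrightarrow> (\<forall>i<n. \<forall>u\<in>W. y' i u \<in> W) = (\<forall>i<n. \<forall>u\<in>W. y i u \<in> W)"
      using eq by (metis subsetD)
    then show ?thesis unfolding psubmodule_def by blast
  qed
  show ?thesis using N pm' unfolding noetherian_pmodule_def ps by blast
qed

context opm begin

lemma shift_opm: "opm s V n (op_shift s y a)"
  unfolding opm_def
proof (rule conjI[OF mods])
  show "pmodule s V n (op_shift s y a)"
    unfolding pmodule_def op_shift_def
  proof (intro conjI ballI allI impI)
    show "0 \<in> V" by (rule V0)
  next
    fix u v assume "u \<in> V" "v \<in> V" then show "u + v \<in> V" by (rule Vadd)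
  next
    fix c u assume "u \<in> V" then show "s c u \<in> V" by (rule Vsc)
  next
    fix i u assume "i < n" "u \<in> V" then show "y i u - s (a i) u \<in> V" by (intro Vdiff Vy Vsc)
  next
    fix i u v assume "i < n" "u \<in> V" "v \<in> V"
    then show "y i (u + v) - s (a i) (u + v) = y i u - s (a i) u + (y i v - s (a i) v)"
      by (simp add: yadd scale_right_distrib algebra_simps)
  next
    fix i c u assume "i < n" "u \<in> V"
    then show "y i (s c u) - s (a i) (s c u) = s c (y i u - s (a i) u)"
      by (simp add: ysc scale_right_diff_distrib mult.commute)
  next
    fix i j u assume ij: "i < n" "j < n" and u: "u \<in> V"
    have "y i (y j u - s (a j) u) = y i (y j u) - y i (s (a j) u)"
      using ij u by (simp add: opa_diff[OF A_y] Vy Vsc)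
    moreover have "y j (y i u - s (a i) u) = y j (y i u) - y j (s (a i) u)"
      using ij u by (simp add: opa_diff[OF A_y] Vy Vsc)
    ultimately show "y i (y j u - s (a j) u) - s (a i) (y j u - s (a j) u) =
         y j (y i u - s (a i) u) - s (a j) (y i u - s (a i) u)"
      using ij u by (simp add: ycomm ysc scale_right_diff_distrib scale_left_commute algebra_simps)
  qed
qed

lemma psub_shift: "psubmodule s V n (op_shift s y a) W = psubmodule s V n y W"
proof
  assume W: "psubmodule s V n (op_shift s y a) W"
  show "psubmodule s V n y W" unfolding psubmodule_def
  proof (intro conjI ballI allI impI)
    show "W \<subseteq> V" "0 \<in> W" using W unfolding psubmodule_def by auto
    fix u v assume "u \<in> W" "v \<in> W" then show "u + v \<in> W" using W unfolding psubmodule_def by auto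
  next
    fix c u assume "u \<in> W" then show "s c u \<in> W" using W unfolding psubmodule_def by auto
  next
    fix i u assume i: "i < n" and u: "u \<in> W"
    have "y i u - s (a i) u \<in> W" using W i u unfolding psubmodule_def op_shift_def by auto
    moreover have "s (a i) u \<in> W" using W u unfolding psubmodule_def by auto
    ultimately have "(y i u - s (a i) u) + s (a i) u \<in> W" using W unfolding psubmodule_def by blast
    then show "y i u \<in> W" by simp
  qed
next
  assume W: "psubmodule s V n y W"
  show "psubmodule s V n (op_shift s y a) W" unfolding psubmodule_def
  proof (intro conjI ballI allI impI)
    show "W \<subseteq> V" "0 \<in> W" using W unfolding psubmodule_def by auto
    fix u v assume "u \<in> W" "v \<in> W" then show "u + v \<in> W" using W unfolding psubmodule_def by auto
  next
    fix c u assume "u \<in> W" then show "s c u \<in> W" using W unfolding psubmodule_def by auto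
  next
    fix i u assume i: "i < n" and u: "u \<in> W"
    show "op_shift s y a i u \<in> W" unfolding op_shift_def
      by (rule psub_diff[OF W psubD(5)[OF W i u] psubD(4)[OF W u]])
  qed
qed

lemma noeth_shift: "noetherian_pmodule s V n y \<Longrightarrow> noetherian_pmodule s V n (op_shift s y a)"
  using shift_opm[of a] unfolding noetherian_pmodule_def psub_shift opm_def by blast

lemma Mr_opm: "opm (fscale s) (Mr V n r) n (xr y n r)"
  unfolding opm_def
proof (rule conjI[OF module_fscale[OF mods]])
  let ?T = "trunc_idx n r"
  have Dm_in: "Dm i \<alpha> \<in> ?T" if "\<alpha> \<in> ?T" "i < n" "1 \<le> \<alpha> i" for i \<alpha> using Dm_trunc' that .
  show "pmodule (fscale s) (Mr V n r) n (xr y n r)"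
    unfolding pmodule_def
  proof (intro conjI ballI allI impI)
    show "0 \<in> Mr V n r" unfolding Mr_def using V0 by simp
  next
    fix f g assume "f \<in> Mr V n r" "g \<in> Mr V n r"
    then show "f + g \<in> Mr V n r" unfolding Mr_def by simp (metis Vadd add.right_neutral)
  next
    fix c f assume "f \<in> Mr V n r"
    then show "fscale s c f \<in> Mr V n r" unfolding Mr_def fscale_def by simp (metis Vsc scale_zero_right)
  next
    fix i f assume i: "i < n" and f: "f \<in> Mr V n r"
    have fV: "\<forall>\<alpha>. f \<alpha> \<in> V" using f unfolding Mr_def by auto
    show "xr y n r i f \<in> Mr V n r" unfolding Mr_def mem_Collect_eq
    proof (intro conjI allI impI)
      fix \<alpha> show "xr y n r i f \<alpha> \<in> V" unfolding xr_apply using fV i by (auto intro!: Vdiff Vy V0)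
    next
      fix \<alpha> assume "xr y n r i f \<alpha> \<noteq> 0" then show "\<alpha> \<in> ?T" unfolding xr_apply by (auto split: if_splits)
    qed
  next
    fix i f g assume i: "i < n" and f: "f \<in> Mr V n r" and g: "g \<in> Mr V n r"
    have fV: "\<forall>\<alpha>. f \<alpha> \<in> V" "\<forall>\<alpha>. g \<alpha> \<in> V" using f g unfolding Mr_def by auto
    show "xr y n r i (f + g) = xr y n r i f + xr y n r i g"
      unfolding fun_eq_iff xr_apply using fV i by (auto simp: yadd)
  next
    fix i c f assume i: "i < n" and f: "f \<in> Mr V n r"
    have fV: "\<forall>\<alpha>. f \<alpha> \<in> V" using f unfolding Mr_def by auto
    show "xr y n r i (fscale s c f) = fscale s c (xr y n r i f)"
      unfolding fun_eq_iff xr_apply fscale_def using fV i by (auto simp: ysc scale_right_diff_distrib)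
  next
    fix i j f assume i: "i < n" and j: "j < n" and f: "f \<in> Mr V n r"
    have fV: "\<forall>\<alpha>. f \<alpha> \<in> V" using f unfolding Mr_def by auto
    show "xr y n r i (xr y n r j f) = xr y n r j (xr y n r i f)"
    proof
      fix \<alpha>
      show "xr y n r i (xr y n r j f) \<alpha> = xr y n r j (xr y n r i f) \<alpha>"
      proof (cases "\<alpha> \<in> ?T")
        case False then show ?thesis by (simp add: xr_apply)
      next
        case T: True
        define ci where "ci = (1 \<le> \<alpha> i)"
        define cj where "cj = (1 \<le> \<alpha> j)"
        have e1: "xr y n r i (xr y n r j f) \<alpha> = y i (y j (f \<alpha>)) - (if cj then y i (f (Dm j \<alpha>)) else 0)
            - (if ci then y j (f (Dm i \<alpha>)) - (if 1 \<le> Dm i \<alpha> j then f (Dm j (Dm i \<alpha>)) else 0) else 0)"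
          using T i j fV Dm_in[OF T i] unfolding ci_def cj_def
          by (auto simp: xr_apply opa_diff[OF A_y] Vy y0)
        have e2: "xr y n r j (xr y n r i f) \<alpha> = y j (y i (f \<alpha>)) - (if ci then y j (f (Dm i \<alpha>)) else 0)
            - (if cj then y i (f (Dm j \<alpha>)) - (if 1 \<le> Dm j \<alpha> i then f (Dm i (Dm j \<alpha>)) else 0) else 0)"
          using T i j fV Dm_in[OF T j] unfolding ci_def cj_def
          by (auto simp: xr_apply opa_diff[OF A_y] Vy y0)
        show ?thesis
        proof (cases "i = j")
          case True then show ?thesis using e1 e2 by simp
        next
          case False
          have d1: "Dm i \<alpha> j = \<alpha> j" "Dm j \<alpha> i = \<alpha> i" using False by (auto simp: Dm_def)
          have d2: "Dm j (Dm i \<alpha>) = Dm i (Dm j \<alpha>)" using False by (auto simp: Dm_def fun_eq_iff)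
          show ?thesis unfolding e1 e2 d1 d2 ci_def[symmetric] cj_def[symmetric] ycomm[OF i j fV(1)[rule_format]]
            by (cases ci; cases cj) (simp_all add: algebra_simps)
        qed
      qed
    qed
  qed
qed

end


lemma sh_apply: "op_shift (fscale s) (xr y n r) a i g \<alpha> = xr y n r i g \<alpha> - s (a i) (g \<alpha>)"
  by (simp add: op_shift_def fscale_def)

lemma trunc0: "trunc_idx n 0 = {}"
  unfolding trunc_idx_def by simp

lemma top_sub: "top_idx n r \<subseteq> trunc_idx n (Suc r)"
  unfolding top_idx_def by auto

lemma top_finite: "finite (top_idx n r)"
  using finite_subset[OF top_sub trunc_finite] .

context opm begin

lemma Mr_noeth: assumes N: "noetherian_pmodule s V n y"
  shows "noetherian_pmodule (fscale s) (Mr V n r) n (xr y n r)"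
proof (induct r)
  case 0
  have "noetherian_pmodule (fscale s) (FS V {}) n (\<lambda>i. lift (y i))"
    by (rule FS_noeth[OF N]) simp
  moreover have "\<forall>i<n. \<forall>f\<in>FS V {}. xr y n 0 i f = lift (y i) f"
    unfolding FS_def by (auto simp: fun_eq_iff xr_apply trunc0 lift_def y0)
  ultimately have "noetherian_pmodule (fscale s) (FS V {}) n (xr y n 0)" by (rule noeth_cong)
  then show ?case unfolding Mr_FS trunc0 .
next
  case (Suc r)
  interpret R: opm "fscale s" "Mr V n (Suc r)" n "xr y n (Suc r)" by (rule Mr_opm)
  let ?K = "FS V (top_idx n r)"
  define \<pi> where "\<pi> f = (\<lambda>\<alpha>. if \<alpha> \<in> trunc_idx n r then f \<alpha> else 0)" for f :: "(nat \<Rightarrow> nat) \<Rightarrow> 'm"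
  have a1: "?K \<subseteq> Mr V n (Suc r)" unfolding Mr_FS FS_def using top_sub by blast
  have eqK: "\<forall>i<n. \<forall>f\<in>?K. xr y n (Suc r) i f = lift (y i) f"
  proof (intro allI impI ballI)
    fix i f assume i: "i < n" and f: "f \<in> ?K"
    show "xr y n (Suc r) i f = lift (y i) f"
    proof
      fix \<alpha>
      show "xr y n (Suc r) i f \<alpha> = lift (y i) f \<alpha>"
      proof (cases "\<alpha> \<in> trunc_idx n (Suc r)")
        case True
        have "1 \<le> \<alpha> i \<Longrightarrow> f (Dm i \<alpha>) = 0" using Dm_not_top[OF True i] f unfolding FS_def by blast
        then show ?thesis using True by (simp add: xr_apply lift_def)
      next
        case False
        then have "f \<alpha> = 0" using f top_sub unfolding FS_def by blast
        then show ?thesis using False i by (simp add: xr_apply lift_def y0)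
      qed
    qed
  qed
  have a2: "noetherian_pmodule (fscale s) ?K n (xr y n (Suc r))"
    by (rule noeth_cong[OF FS_noeth[OF N top_finite] eqK])
  have a4: "\<forall>v\<in>Mr V n (Suc r). \<pi> v \<in> Mr V n r" unfolding Mr_def \<pi>_def using V0 by auto
  have a5: "\<forall>u\<in>Mr V n (Suc r). \<forall>v\<in>Mr V n (Suc r). \<pi> (u + v) = \<pi> u + \<pi> v"
    unfolding \<pi>_def by (simp add: fun_eq_iff)
  have a6: "\<forall>c. \<forall>v\<in>Mr V n (Suc r). \<pi> (fscale s c v) = fscale s c (\<pi> v)"
    unfolding \<pi>_def by (simp add: fun_eq_iff fscale_def)
  have a7: "\<forall>i<n. \<forall>v\<in>Mr V n (Suc r). \<pi> (xr y n (Suc r) i v) = xr y n r i (\<pi> v)"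
  proof (intro allI impI ballI)
    fix i v assume i: "i < n" and v: "v \<in> Mr V n (Suc r)"
    show "\<pi> (xr y n (Suc r) i v) = xr y n r i (\<pi> v)"
    proof
      fix \<alpha>
      show "\<pi> (xr y n (Suc r) i v) \<alpha> = xr y n r i (\<pi> v) \<alpha>"
      proof (cases "\<alpha> \<in> trunc_idx n r")
        case True
        have T: "\<alpha> \<in> trunc_idx n (Suc r)" using True trunc_mono[of r "Suc r"] by auto
        have "1 \<le> \<alpha> i \<Longrightarrow> Dm i \<alpha> \<in> trunc_idx n r" using Dm_trunc'[OF True i] .
        then show ?thesis using True T by (simp add: \<pi>_def xr_apply)
      next
        case False then show ?thesis by (simp add: \<pi>_def xr_apply)
      qed
    qed
  qed
  have a8: "\<forall>v\<in>Mr V n (Suc r). (\<pi> v = 0) = (v \<in> ?K)"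
  proof
    fix v assume v: "v \<in> Mr V n (Suc r)"
    show "(\<pi> v = 0) = (v \<in> ?K)"
    proof
      assume p: "\<pi> v = 0"
      show "v \<in> ?K" unfolding FS_def mem_Collect_eq
      proof (intro conjI allI impI)
        fix \<alpha> show "v \<alpha> \<in> V" using v unfolding Mr_def by auto
      next
        fix \<alpha> assume nz: "v \<alpha> \<noteq> 0"
        then have "\<alpha> \<in> trunc_idx n (Suc r)" using v unfolding Mr_def by auto
        moreover have "\<alpha> \<notin> trunc_idx n r"
        proof
          assume "\<alpha> \<in> trunc_idx n r"
          then have "\<pi> v \<alpha> = v \<alpha>" unfolding \<pi>_def by simp
          then show False using p nz by simp
        qed
        ultimately show "\<alpha> \<in> top_idx n r" unfolding top_eq by blast
      qed
    next
      assume "v \<in> ?K"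
      then show "\<pi> v = 0" unfolding \<pi>_def FS_def top_eq by (auto simp: fun_eq_iff)
    qed
  qed
  show ?case by (rule R.noeth_ext[OF a1 a2 Suc a4 a5 a6 a7 a8])
qed

lemma mV_down: assumes r: "1 \<le> r"
  and m: "opm.mV (Mr V n r) n (op_shift (fscale s) (xr y n r) a)"
  shows "opm.mV V n (op_shift s y a)"
proof -
  interpret R: opm "fscale s" "Mr V n r" n "xr y n r" by (rule Mr_opm)
  have o1: "opm s V n (op_shift s y a)" by (rule shift_opm)
  have o2: "opm (fscale s) (Mr V n r) n (op_shift (fscale s) (xr y n r) a)" by (rule R.shift_opm)
  show ?thesis unfolding opm.mV_def[OF o1]
proof
  fix v assume v: "v \<in> V"
  define f :: "(nat \<Rightarrow> nat) \<Rightarrow> 'm" where "f = (\<lambda>\<alpha>. if \<alpha> = (\<lambda>_. 0) then v else 0)"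
  have f: "f \<in> Mr V n r" unfolding Mr_def f_def using v V0 zero_trunc[OF r] by auto
  obtain w where w: "\<forall>i<n. w i \<in> Mr V n r" "f = (\<Sum>i<n. op_shift (fscale s) (xr y n r) a i (w i))"
    using m f unfolding opm.mV_def[OF o2] by blast
  have "v = f (\<lambda>_. 0)" unfolding f_def by simp
  also have "\<dots> = (\<Sum>i<n. op_shift s y a i (w i (\<lambda>_. 0)))"
    unfolding w(2) sum_fun_apply using zero_trunc[OF r]
    by (simp add: sh_apply xr_apply op_shift_def fscale_def)
  finally show "\<exists>w. (\<forall>i<n. w i \<in> V) \<and> v = (\<Sum>i<n. op_shift s y a i (w i))"
    using w(1) unfolding Mr_def by (intro exI[of _ "\<lambda>i. w i (\<lambda>_. 0)"]) auto
qed
qed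

end


context opm begin

lemma mV_up: assumes m: "opm.mV V n (op_shift s y a)"
  shows "opm.mV (Mr V n r) n (op_shift (fscale s) (xr y n r) a)"
proof (induct r)
  case 0
  interpret R: opm "fscale s" "Mr V n 0" n "xr y n 0" by (rule Mr_opm)
  have o2: "opm (fscale s) (Mr V n 0) n (op_shift (fscale s) (xr y n 0) a)" by (rule R.shift_opm)
  show ?case unfolding opm.mV_def[OF o2]
  proof
    fix f assume f: "f \<in> Mr V n 0"
    then have f0: "f = 0" unfolding Mr_def trunc0 by (auto simp: fun_eq_iff)
    have "(\<Sum>i<n. op_shift (fscale s) (xr y n 0) a i (0::(nat \<Rightarrow> nat) \<Rightarrow> 'm)) = 0"
      by (rule sum.neutral) (auto simp: fun_eq_iff sh_apply xr_apply trunc0)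
    then show "\<exists>w. (\<forall>i<n. w i \<in> Mr V n 0) \<and> f = (\<Sum>i<n. op_shift (fscale s) (xr y n 0) a i (w i))"
      using f0 R.V0 by (intro exI[of _ "\<lambda>i. 0"]) auto
  qed
next
  case (Suc r)
  interpret R: opm "fscale s" "Mr V n r" n "xr y n r" by (rule Mr_opm)
  interpret R1: opm "fscale s" "Mr V n (Suc r)" n "xr y n (Suc r)" by (rule Mr_opm)
  have o1: "opm s V n (op_shift s y a)" by (rule shift_opm)
  have o2: "opm (fscale s) (Mr V n r) n (op_shift (fscale s) (xr y n r) a)" by (rule R.shift_opm)
  have o3: "opm (fscale s) (Mr V n (Suc r)) n (op_shift (fscale s) (xr y n (Suc r)) a)" by (rule R1.shift_opm)
  interpret R2: opm "fscale s" "Mr V n (Suc r)" n "op_shift (fscale s) (xr y n (Suc r)) a" by (rule o3)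
  have mM: "\<forall>v\<in>V. \<exists>w. (\<forall>i<n. w i \<in> V) \<and> v = (\<Sum>i<n. y i (w i) - s (a i) (w i))"
    using m unfolding opm.mV_def[OF o1] by (simp add: op_shift_def)
  have IH: "\<forall>g\<in>Mr V n r. \<exists>w. (\<forall>i<n. w i \<in> Mr V n r) \<and> g = (\<Sum>i<n. op_shift (fscale s) (xr y n r) a i (w i))"
    using Suc unfolding opm.mV_def[OF o2] .
  let ?sh = "op_shift (fscale s) (xr y n (Suc r)) a"
  let ?T = "trunc_idx n r" and ?T1 = "trunc_idx n (Suc r)" and ?top = "top_idx n r"
  have TT1: "?T \<subseteq> ?T1" by (rule trunc_mono) simp
  have MM1: "Mr V n r \<subseteq> Mr V n (Suc r)" unfolding Mr_def using TT1 by auto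
  show ?case unfolding opm.mV_def[OF o3]
  proof
    fix f assume f: "f \<in> Mr V n (Suc r)"
    have fV: "\<forall>\<alpha>. f \<alpha> \<in> V" using f unfolding Mr_def by auto
    define tf where "tf = (\<lambda>\<alpha>. if \<alpha> \<in> ?T then f \<alpha> else 0)"
    have tf: "tf \<in> Mr V n r" unfolding tf_def Mr_def using fV V0 by auto
    obtain w where w: "\<forall>i<n. w i \<in> Mr V n r" "tf = (\<Sum>i<n. op_shift (fscale s) (xr y n r) a i (w i))"
      using IH tf by blast
    have w1: "\<forall>i<n. w i \<in> Mr V n (Suc r)" using w(1) MM1 by blast
    define f1 where "f1 = (\<Sum>i<n. ?sh i (w i))"
    have f1M: "f1 \<in> Mr V n (Suc r)" unfolding f1_def using w1 by (auto intro!: R2.Vsum R2.Vy)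
    have A: "f1 \<alpha> = f \<alpha>" if "\<alpha> \<in> ?T" for \<alpha>
    proof -
      have a1: "\<alpha> \<in> ?T1" using that TT1 by blast
      have "f1 \<alpha> = (\<Sum>i<n. ?sh i (w i) \<alpha>)" unfolding f1_def sum_fun_apply ..
      also have "\<dots> = (\<Sum>i<n. op_shift (fscale s) (xr y n r) a i (w i) \<alpha>)"
        by (rule sum.cong) (use that a1 in \<open>simp_all add: sh_apply xr_apply\<close>)
      also have "\<dots> = tf \<alpha>" unfolding w(2) sum_fun_apply ..
      finally show ?thesis using that unfolding tf_def by simp
    qed
    define h where "h = f - f1"
    have hM: "h \<in> Mr V n (Suc r)" unfolding h_def by (rule R2.Vdiff[OF f f1M])
    have hV: "\<forall>\<alpha>. h \<alpha> \<in> V" using hM unfolding Mr_def by auto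
    have "\<forall>\<alpha>\<in>?top. \<exists>u. (\<forall>i<n. u i \<in> V) \<and> h \<alpha> = (\<Sum>i<n. y i (u i) - s (a i) (u i))"
      using mM hV by blast
    then obtain U where U: "\<forall>\<alpha>\<in>?top. (\<forall>i<n. U \<alpha> i \<in> V) \<and> h \<alpha> = (\<Sum>i<n. y i (U \<alpha> i) - s (a i) (U \<alpha> i))"
      by metis
    define w2 where "w2 i = (\<lambda>\<alpha>. if \<alpha> \<in> ?top then U \<alpha> i else 0)" for i
    have w2M: "\<forall>i<n. w2 i \<in> Mr V n (Suc r)"
      unfolding Mr_def w2_def using U V0 top_sub[of n r] by (auto simp: subset_iff)
    have B: "(\<Sum>i<n. ?sh i (w2 i)) = h"
    proof
      fix \<alpha>
      have lhs: "(\<Sum>i<n. ?sh i (w2 i)) \<alpha> = (\<Sum>i<n. ?sh i (w2 i) \<alpha>)" unfolding sum_fun_apply ..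
      show "(\<Sum>i<n. ?sh i (w2 i)) \<alpha> = h \<alpha>"
      proof (cases "\<alpha> \<in> ?T1")
        case False
        then have "\<alpha> \<notin> ?top" using top_sub by blast
        then have "\<forall>i<n. ?sh i (w2 i) \<alpha> = 0" using False by (simp add: sh_apply xr_apply w2_def)
        moreover have "h \<alpha> = 0" using hM False unfolding Mr_def by auto
        ultimately show ?thesis unfolding lhs by simp
      next
        case T1: True
        have nD: "\<forall>i<n. 1 \<le> \<alpha> i \<longrightarrow> w2 i (Dm i \<alpha>) = 0" using Dm_not_top[OF T1] unfolding w2_def by auto
        show ?thesis
        proof (cases "\<alpha> \<in> ?top")
          case True
          have "(\<Sum>i<n. ?sh i (w2 i) \<alpha>) = (\<Sum>i<n. y i (U \<alpha> i) - s (a i) (U \<alpha> i))"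
            by (rule sum.cong) (use T1 True nD in \<open>auto simp: sh_apply xr_apply w2_def\<close>)
          then show ?thesis unfolding lhs using U True by simp
        next
          case False
          then have aT: "\<alpha> \<in> ?T" using T1 unfolding top_eq by blast
          have "\<forall>i<n. ?sh i (w2 i) \<alpha> = 0" using T1 False nD by (auto simp: sh_apply xr_apply w2_def y0)
          moreover have "h \<alpha> = 0" unfolding h_def using A[OF aT] by simp
          ultimately show ?thesis unfolding lhs by simp
        qed
      qed
    qed
    have "f = f1 + h" unfolding h_def by simp
    also have "\<dots> = (\<Sum>i<n. ?sh i (w i) + ?sh i (w2 i))" unfolding f1_def B[symmetric] by (simp add: sum.distrib)
    also have "\<dots> = (\<Sum>i<n. ?sh i (w i + w2 i))"
      by (rule sum.cong) (use w1 w2M in \<open>auto simp: R2.yadd\<close>)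
    finally show "\<exists>w. (\<forall>i<n. w i \<in> Mr V n (Suc r)) \<and> f = (\<Sum>i<n. ?sh i (w i))"
      using w1 w2M R2.Vadd by (intro exI[of _ "\<lambda>i. w i + w2 i"]) auto
  qed
qed

end

theorem lemma4p1:
  fixes s :: "'k::field \<Rightarrow> 'm::ab_group_add \<Rightarrow> 'm"
    and n :: nat
    and x :: "nat \<Rightarrow> 'm \<Rightarrow> 'm"
  assumes "alg_closed TYPE('k)"
    and "vector_space s"
    and "noetherian_pmodule s UNIV n x"
  shows "\<forall>r\<ge>1.
      noetherian_pmodule (fscale s) (Mr UNIV n r) n (xr x n r) \<and>
      taylor_spectrum (fscale s) (Mr UNIV n r) n (xr x n r) = taylor_spectrum s UNIV n x \<and>
      (\<forall>p a. (\<forall>i\<ge>n. a i = 0) \<longrightarrow>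
         kos_homology_findim (fscale s) (Mr UNIV n r) n (op_shift (fscale s) (xr x n r) a) p)"
proof (intro allI impI, intro conjI)
  fix r :: nat assume r: "1 \<le> r"
  have N: "noetherian_pmodule s UNIV n x" by (rule assms(3))
  interpret M: opm s UNIV n x
    unfolding opm_def using vs_module[OF assms(2)] N unfolding noetherian_pmodule_def by blast
  interpret R: opm "fscale s" "Mr UNIV n r" n "xr x n r" by (rule M.Mr_opm)
  have NR: "noetherian_pmodule (fscale s) (Mr UNIV n r) n (xr x n r)" by (rule M.Mr_noeth[OF N])
  then show "noetherian_pmodule (fscale s) (Mr UNIV n r) n (xr x n r)" .
  show "taylor_spectrum (fscale s) (Mr UNIV n r) n (xr x n r) = taylor_spectrum s UNIV n x"
  proof (rule set_eqI)
    fix a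
    interpret Ma: opm s UNIV n "op_shift s x a" by (rule M.shift_opm)
    interpret Ra: opm "fscale s" "Mr UNIV n r" n "op_shift (fscale s) (xr x n r) a" by (rule R.shift_opm)
    have e1: "kos_exact s UNIV n (op_shift s x a) = Ma.mV"
      by (rule Ma.exact_iff_mV[OF M.noeth_shift[OF N]])
    have e2: "kos_exact (fscale s) (Mr UNIV n r) n (op_shift (fscale s) (xr x n r) a) = Ra.mV"
      by (rule Ra.exact_iff_mV[OF R.noeth_shift[OF NR]])
    have e3: "Ra.mV = Ma.mV" using M.mV_up[of a r] M.mV_down[OF r, of a] by blast
    show "a \<in> taylor_spectrum (fscale s) (Mr UNIV n r) n (xr x n r) \<longleftrightarrow> a \<in> taylor_spectrum s UNIV n x"
      unfolding taylor_spectrum_def mem_Collect_eq e1 e2 e3 ..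
  qed
  show "\<forall>p a. (\<forall>i\<ge>n. a i = 0) \<longrightarrow>
         kos_homology_findim (fscale s) (Mr UNIV n r) n (op_shift (fscale s) (xr x n r) a) p"
  proof (intro allI impI)
    fix p a
    interpret Ra: opm "fscale s" "Mr UNIV n r" n "op_shift (fscale s) (xr x n r) a" by (rule R.shift_opm)
    show "kos_homology_findim (fscale s) (Mr UNIV n r) n (op_shift (fscale s) (xr x n r) a) p"
      by (rule Ra.findim[OF R.noeth_shift[OF NR]])
  qed
qed


end
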